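(* In the $q$-sphere setting described in the context, let $\alpha,\beta\in\mathbb{C}$ and $\delta\in\mathbb{R}\setminus\{0\}$ satisfy $\delta^2\alpha^*=\beta q^2$. Then $(\nabla_{\mathcal S},\sigma_{\mathcal S})$ is a left bimodule connection on $\mathcal S$, and $D=\triangleright\circ\nabla_{\mathcal{S}}$, given by $D(xf^++yf^-)=\alpha q^{-1}(\partial_+y)f^++\beta q(\partial_-x)f^-$, together with $\mathcal{J}$ and $\gamma$ satisfy: $\mathcal J^2=-1$, $\mathcal J\gamma=-\gamma\mathcal J$, $\gamma^2=1$, $[\gamma,a]=0$, $D\gamma=-\gamma D$, $[a,\mathcal J b\mathcal J^{-1}]=0$, $\mathcal J D=D\mathcal J$, and $[[D,a],\mathcal J b\mathcal J^{-1}]=0$ for all $a,b\in\mathbb C_q[S^2]$ (the algebraic conditions of a real spectral triple of dimension $2$ with $\epsilon=-1,\epsilon'=1,\epsilon''=-1$).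
   Context: $q$ is a real nonzero number. $\mathbb{C}_q[SU_2]$ is the $*$-algebra generated by $a,b,c,d$ with $ba=qab$, $ca=qac$, $db=qbd$, $dc=qcd$, $bc=cb$, $da-ad=(q-q^{-1})bc$, $ad-q^{-1}bc=1$, graded by $|a|=|c|=1$, $|b|=|d|=-1$. It carries Woronowicz's left-covariant 3-dimensional $*$-calculus $\Omega^1$, free as a left module with basis $e^0,e^+,e^-$ of degrees $0,2,-2$, with $e^0x=q^{2|x|}xe^0$, $e^\pm x=q^{|x|}xe^\pm$ for homogeneous $x$, and $(e^\pm)^*=-q^{\mp1}e^\mp$. Let $\pi:\Omega^1\to\Omega^1_{hor}$ be the left-module projection killing $e^0$, and write $\pi{\rm d}x=(\partial_+x)e^++(\partial_-x)e^-$. $\mathbb{C}_q[S^2]$ is the degree-0 subalgebra; its calculus $\Omega^1=\Omega^{1,0}\oplus\Omega^{0,1}$ with $\Omega^{1,0}=\{fe^+:|f|=-2\}$, $\Omega^{0,1}=\{fe^-:|f|=2\}$ and ${\rm d}=\pi{\rm d}$. The spinor bimodule is $\mathcal S=\mathcal S_+\oplus\mathcal S_-$, $\mathcal S_\pm=\{xf^\pm: x\in\mathbb C_q[SU_2],|x|=\mp1\}$, where $f^\pm$ are formal symbols commuting with $\mathbb C_q[S^2]$ (so $\mathcal S_\pm$ is the degree $\mp1$ subspace with left/right multiplication). Writing $k=a\otimes d-q^{-1}c\otimes b$ and $k'=d\otimes a-qb\otimes c$: $\nabla_{\mathcal S}(xf^++yf^-)=\pi{\rm d}x.a\otimes d f^+-q^{-1}\pi{\rm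 d}x.c\otimes bf^++\pi{\rm d}y.d\otimes af^--q\,\pi{\rm d}y.b\otimes cf^-$, and $\sigma_{\mathcal S}((xf^++yf^-)\otimes fe^\pm)=xfe^\pm(a\otimes d-q^{-1}c\otimes b)f^++yfe^\pm(d\otimes a-qb\otimes c)f^-$ for $|f|=\mp2$. The Clifford action: $fe^+\triangleright yf^-=\alpha\,fyf^+$, $fe^-\triangleright xf^+=\beta\,fxf^-$, and $fe^+\triangleright xf^+=fe^-\triangleright yf^-=0$. $\mathcal J(xf^\pm)=\pm\delta^{\pm1}x^*f^\mp$ (antilinear), $\gamma=\pm\mathrm{id}$ on $\mathcal S_\pm$. *)

theory Defs
  imports Complex_Main
begin

section \<open>The free algebra on a,b,c,d and the ideal of relations of C_q[SU_2]\<close>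

datatype gen = GA | GB | GC | GD

type_synonym word = "gen list"

text \<open>Elements of the free algebra are represented by formal linear combinations
 (lists of coefficient/word pairs); two representations are the same element of the
 free algebra iff they have the same coefficient function.\<close>
type_synonym fa = "(complex \<times> word) list"

definition coef :: "fa \<Rightarrow> word \<Rightarrow> complex" where
  "coef p w = sum_list (map (\<lambda>(c,u). if u = w then c else 0) p)"

definition fsc :: "complex \<Rightarrow> fa \<Rightarrow> fa" where
  "fsc k p = map (\<lambda>(c,u). (k * c, u)) p"

definition fadd :: "fa \<Rightarrow> fa \<Rightarrow> fa" where
  "fadd p p' = p @ p'"

definition fneg :: "fa \<Rightarrow> fa" where
  "fneg p = fsc (-1) p"

definition fsub :: "fa \<Rightarrow> fa \<Rightarrow> fa" where
  "fsub p p' = p @ fneg p'"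

definition fmul :: "fa \<Rightarrow> fa \<Rightarrow> fa" where
  "fmul p p' = concat (map (\<lambda>(c,u). map (\<lambda>(c',u'). (c * c', u @ u')) p') p)"

definition fconst :: "complex \<Rightarrow> fa" where
  "fconst k = [(k, [])]"

definition fgen :: "gen \<Rightarrow> fa" where
  "fgen g = [(1, [g])]"

abbreviation "ga \<equiv> fgen GA"
abbreviation "gb \<equiv> fgen GB"
abbreviation "gc \<equiv> fgen GC"
abbreviation "gd \<equiv> fgen GD"

definition qrels :: "real \<Rightarrow> fa list" where
  "qrels q = (let Q = complex_of_real q in
    [ fsub (fmul gb ga) (fsc Q (fmul ga gb)),
      fsub (fmul gc ga) (fsc Q (fmul ga gc)),
      fsub (fmul gd gb) (fsc Q (fmul gb gd)),
      fsub (fmul gd gc) (fsc Q (fmul gc gd)),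
      fsub (fmul gb gc) (fmul gc gb),
      fsub (fsub (fmul gd ga) (fmul ga gd)) (fsc (Q - inverse Q) (fmul gb gc)),
      fsub (fsub (fmul ga gd) (fsc (inverse Q) (fmul gb gc))) (fconst 1) ])"

inductive_set qideal :: "real \<Rightarrow> fa set" for q :: real where
  qideal_nil: "[] \<in> qideal q"
| qideal_gen: "i < length (qrels q) \<Longrightarrow> fmul (fmul [(1,u)] (qrels q ! i)) [(1,v)] \<in> qideal q"
| qideal_add: "p \<in> qideal q \<Longrightarrow> p' \<in> qideal q \<Longrightarrow> p @ p' \<in> qideal q"
| qideal_sc: "p \<in> qideal q \<Longrightarrow> fsc k p \<in> qideal q"

definition fzero :: "real \<Rightarrow> fa \<Rightarrow> bool" where
  "fzero q p \<longleftrightarrow> (\<exists>r \<in> qideal q. coef p = coef r)"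

definition feq :: "real \<Rightarrow> fa \<Rightarrow> fa \<Rightarrow> bool" where
  "feq q p p' \<longleftrightarrow> fzero q (fsub p p')"

section \<open>Grading, star\<close>

fun gdeg :: "gen \<Rightarrow> int" where
  "gdeg GA = 1" | "gdeg GC = 1" | "gdeg GB = -1" | "gdeg GD = -1"

definition wdeg :: "word \<Rightarrow> int" where
  "wdeg w = sum_list (map gdeg w)"

text \<open>p is a homogeneous representative of degree n (every element of the degree n
 part of C_q[SU_2] has such a representative, since the relations are homogeneous).\<close>
definition homog :: "int \<Rightarrow> fa \<Rightarrow> bool" where
  "homog n p \<longleftrightarrow> (\<forall>(c,u) \<in> set p. wdeg u = n)"

fun gstar :: "real \<Rightarrow> gen \<Rightarrow> fa" where
  "gstar q GA = gd"
| "gstar q GB = fsc (- inverse (complex_of_real q)) gc"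
| "gstar q GC = fsc (- complex_of_real q) gb"
| "gstar q GD = ga"

fun wstar :: "real \<Rightarrow> word \<Rightarrow> fa" where
  "wstar q [] = fconst 1"
| "wstar q (g # w) = fmul (wstar q w) (gstar q g)"

definition fstar :: "real \<Rightarrow> fa \<Rightarrow> fa" where
  "fstar q p = concat (map (\<lambda>(c,u). fsc (cnj c) (wstar q u)) p)"

section \<open>The horizontal part of Woronowicz's calculus: pi d x = (d_+ x) e^+ + (d_- x) e^-\<close>

text \<open>da = a e^0 + q b e^+, db = a e^- - q^-2 b e^0, dc = c e^0 + q d e^+, dd = c e^- - q^-2 d e^0.\<close>
fun dplus_gen :: "real \<Rightarrow> gen \<Rightarrow> fa" where
  "dplus_gen q GA = fsc (complex_of_real q) gb"
| "dplus_gen q GC = fsc (complex_of_real q) gd"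
| "dplus_gen q GB = []"
| "dplus_gen q GD = []"

fun dminus_gen :: "real \<Rightarrow> gen \<Rightarrow> fa" where
  "dminus_gen q GB = ga"
| "dminus_gen q GD = gc"
| "dminus_gen q GA = []"
| "dminus_gen q GC = []"

text \<open>Leibniz rule with e^{\<pm>} y = q^{|y|} y e^{\<pm>}: d(g w) = (dg) q^{|w|} w + g dw.\<close>
fun wder :: "(gen \<Rightarrow> fa) \<Rightarrow> real \<Rightarrow> word \<Rightarrow> fa" where
  "wder dg q [] = []"
| "wder dg q (g # w) =
     fadd (fsc (complex_of_real (q powi wdeg w)) (fmul (dg g) [(1, w)])) (fmul [(1,[g])] (wder dg q w))"

definition dplus :: "real \<Rightarrow> fa \<Rightarrow> fa" where
  "dplus q p = concat (map (\<lambda>(c,u). fsc c (wder (dplus_gen q) q u)) p)"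

definition dminus :: "real \<Rightarrow> fa \<Rightarrow> fa" where
  "dminus q p = concat (map (\<lambda>(c,u). fsc c (wder (dminus_gen q) q u)) p)"

section \<open>Bimodules: Omega^1 of the sphere and the spinor bundle\<close>

text \<open>Both are represented by pairs of representatives:
 a 1-form (f1,f2) stands for f1 e^+ + f2 e^- (|f1| = -2, |f2| = 2), and
 a spinor (x,y) stands for x f^+ + y f^- (|x| = -1, |y| = 1).\<close>
type_synonym pr = "fa \<times> fa"

definition wfOm :: "pr \<Rightarrow> bool" where
  "wfOm m \<longleftrightarrow> homog (-2) (fst m) \<and> homog 2 (snd m)"

definition wfS :: "pr \<Rightarrow> bool" where
  "wfS s \<longleftrightarrow> homog (-1) (fst s) \<and> homog 1 (snd s)"

definition padd :: "pr \<Rightarrow> pr \<Rightarrow> pr" where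
  "padd m m' = (fadd (fst m) (fst m'), fadd (snd m) (snd m'))"

definition psc :: "complex \<Rightarrow> pr \<Rightarrow> pr" where
  "psc k m = (fsc k (fst m), fsc k (snd m))"

definition pneg :: "pr \<Rightarrow> pr" where
  "pneg m = psc (-1) m"

definition psub :: "pr \<Rightarrow> pr \<Rightarrow> pr" where
  "psub m m' = padd m (pneg m')"

definition plmul :: "fa \<Rightarrow> pr \<Rightarrow> pr" where
  "plmul b m = (fmul b (fst m), fmul b (snd m))"

definition prmul :: "pr \<Rightarrow> fa \<Rightarrow> pr" where
  "prmul m b = (fmul (fst m) b, fmul (snd m) b)"

definition pzero :: "real \<Rightarrow> pr \<Rightarrow> bool" where
  "pzero q m \<longleftrightarrow> fzero q (fst m) \<and> fzero q (snd m)"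

definition peq :: "real \<Rightarrow> pr \<Rightarrow> pr \<Rightarrow> bool" where
  "peq q m m' \<longleftrightarrow> pzero q (psub m m')"

definition pd :: "real \<Rightarrow> fa \<Rightarrow> pr" where
  "pd q x = (dplus q x, dminus q x)"

text \<open>Right multiplication of a horizontal form by z of degree n: (f e^{\<pm>}) z = q^n f z e^{\<pm>}.\<close>
definition hmul :: "real \<Rightarrow> pr \<Rightarrow> fa \<Rightarrow> int \<Rightarrow> pr" where
  "hmul q m z n = psc (complex_of_real (q powi n)) (prmul m z)"

section \<open>Tensor products over B = C_q[S^2]\<close>

text \<open>Formal linear combinations of pairs m \<otimes> n.\<close>
type_synonym ten = "(complex \<times> pr \<times> pr) list"

definition tcoef :: "ten \<Rightarrow> pr \<times> pr \<Rightarrow> complex" where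
  "tcoef t k = sum_list (map (\<lambda>(c,mn). if mn = k then c else 0) t)"

definition tsc :: "complex \<Rightarrow> ten \<Rightarrow> ten" where
  "tsc k t = map (\<lambda>(c,mn). (k * c, mn)) t"

definition tsub :: "ten \<Rightarrow> ten \<Rightarrow> ten" where
  "tsub t t' = t @ tsc (-1) t'"

definition tlmul :: "fa \<Rightarrow> ten \<Rightarrow> ten" where
  "tlmul b t = map (\<lambda>(c,m,n). (c, plmul b m, n)) t"

definition trmul :: "ten \<Rightarrow> fa \<Rightarrow> ten" where
  "trmul t b = map (\<lambda>(c,m,n). (c, m, prmul n b)) t"

definition twf :: "(pr \<Rightarrow> bool) \<Rightarrow> (pr \<Rightarrow> bool) \<Rightarrow> ten \<Rightarrow> bool" where
  "twf wfM wfN t \<longleftrightarrow> (\<forall>(c,m,n) \<in> set t. wfM m \<and> wfN n)"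

text \<open>The subspace of relations defining the balanced tensor product M \<otimes>_B N
 (bilinearity, B-balancedness, independence of representatives).\<close>
inductive_set tnull :: "real \<Rightarrow> (pr \<Rightarrow> bool) \<Rightarrow> (pr \<Rightarrow> bool) \<Rightarrow> ten set"
  for q :: real and wfM :: "pr \<Rightarrow> bool" and wfN :: "pr \<Rightarrow> bool" where
  tn_nil: "[] \<in> tnull q wfM wfN"
| tn_add: "t \<in> tnull q wfM wfN \<Longrightarrow> t' \<in> tnull q wfM wfN \<Longrightarrow> t @ t' \<in> tnull q wfM wfN"
| tn_sc: "t \<in> tnull q wfM wfN \<Longrightarrow> tsc k t \<in> tnull q wfM wfN"
| tn_addL: "wfM m1 \<Longrightarrow> wfM m2 \<Longrightarrow> wfN n \<Longrightarrow>
     [(1, padd m1 m2, n), (-1, m1, n), (-1, m2, n)] \<in> tnull q wfM wfN"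
| tn_addR: "wfM m \<Longrightarrow> wfN n1 \<Longrightarrow> wfN n2 \<Longrightarrow>
     [(1, m, padd n1 n2), (-1, m, n1), (-1, m, n2)] \<in> tnull q wfM wfN"
| tn_scL: "wfM m \<Longrightarrow> wfN n \<Longrightarrow> [(1, psc k m, n), (-k, m, n)] \<in> tnull q wfM wfN"
| tn_scR: "wfM m \<Longrightarrow> wfN n \<Longrightarrow> [(1, m, psc k n), (-k, m, n)] \<in> tnull q wfM wfN"
| tn_bal: "homog 0 b \<Longrightarrow> wfM m \<Longrightarrow> wfN n \<Longrightarrow>
     [(1, prmul m b, n), (-1, m, plmul b n)] \<in> tnull q wfM wfN"
| tn_repL: "wfM m \<Longrightarrow> wfM m' \<Longrightarrow> peq q m m' \<Longrightarrow> wfN n \<Longrightarrow>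
     [(1, m, n), (-1, m', n)] \<in> tnull q wfM wfN"
| tn_repR: "wfM m \<Longrightarrow> wfN n \<Longrightarrow> wfN n' \<Longrightarrow> peq q n n' \<Longrightarrow>
     [(1, m, n), (-1, m, n')] \<in> tnull q wfM wfN"

definition teq :: "real \<Rightarrow> (pr \<Rightarrow> bool) \<Rightarrow> (pr \<Rightarrow> bool) \<Rightarrow> ten \<Rightarrow> ten \<Rightarrow> bool" where
  "teq q wfM wfN t t' \<longleftrightarrow> (\<exists>r \<in> tnull q wfM wfN. tcoef (tsub t t') = tcoef r)"

section \<open>The connection, generalised braiding, Clifford action, D, J, gamma\<close>

text \<open>nabla_S(x f^+ + y f^-) = pi dx.a \<otimes> d f^+ - q^-1 pi dx.c \<otimes> b f^+
   + pi dy.d \<otimes> a f^- - q pi dy.b \<otimes> c f^-.\<close>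
definition nablaS :: "real \<Rightarrow> pr \<Rightarrow> ten" where
  "nablaS q s = (let Q = complex_of_real q; x = fst s; y = snd s in
     [ (1, hmul q (pd q x) ga 1, (gd, [])),
       (- inverse Q, hmul q (pd q x) gc 1, (gb, [])),
       (1, hmul q (pd q y) gd (-1), ([], ga)),
       (- Q, hmul q (pd q y) gb (-1), ([], gc)) ])"

text \<open>sigma_S((x f^+ + y f^-) \<otimes> \<omega>) = x \<omega> (a \<otimes> d - q^-1 c \<otimes> b) f^+ + y \<omega> (d \<otimes> a - q b \<otimes> c) f^-.\<close>
definition sigmaS1 :: "real \<Rightarrow> pr \<Rightarrow> pr \<Rightarrow> ten" where
  "sigmaS1 q s w = (let Q = complex_of_real q; x = fst s; y = snd s in
     [ (1, hmul q (plmul x w) ga 1, (gd, [])),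
       (- inverse Q, hmul q (plmul x w) gc 1, (gb, [])),
       (1, hmul q (plmul y w) gd (-1), ([], ga)),
       (- Q, hmul q (plmul y w) gb (-1), ([], gc)) ])"

definition sigmaS :: "real \<Rightarrow> ten \<Rightarrow> ten" where
  "sigmaS q t = concat (map (\<lambda>(c,s,w). tsc c (sigmaS1 q s w)) t)"

text \<open>Clifford action: f e^+ \<triangleright> y f^- = \<alpha> f y f^+, f e^- \<triangleright> x f^+ = \<beta> f x f^-, others 0.\<close>
definition cliff1 :: "complex \<Rightarrow> complex \<Rightarrow> pr \<Rightarrow> pr \<Rightarrow> pr" where
  "cliff1 \<alpha> \<beta> w s = (fsc \<alpha> (fmul (fst w) (snd s)), fsc \<beta> (fmul (snd w) (fst s)))"

definition cliff :: "complex \<Rightarrow> complex \<Rightarrow> ten \<Rightarrow> pr" where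
  "cliff \<alpha> \<beta> t = (concat (map (\<lambda>(c,w,s). fsc c (fst (cliff1 \<alpha> \<beta> w s))) t),
                   concat (map (\<lambda>(c,w,s). fsc c (snd (cliff1 \<alpha> \<beta> w s))) t))"

definition DiracS :: "real \<Rightarrow> complex \<Rightarrow> complex \<Rightarrow> pr \<Rightarrow> pr" where
  "DiracS q \<alpha> \<beta> s = (fsc (\<alpha> * inverse (complex_of_real q)) (dplus q (snd s)),
                      fsc (\<beta> * complex_of_real q) (dminus q (fst s)))"

definition JS :: "real \<Rightarrow> real \<Rightarrow> pr \<Rightarrow> pr" where
  "JS q \<delta> s = (fsc (- complex_of_real (inverse \<delta>)) (fstar q (snd s)),
               fsc (complex_of_real \<delta>) (fstar q (fst s)))"

definition JSinv :: "real \<Rightarrow> real \<Rightarrow> pr \<Rightarrow> pr" where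
  "JSinv q \<delta> s = pneg (JS q \<delta> s)"

definition gammaS :: "pr \<Rightarrow> pr" where
  "gammaS s = (fst s, fneg (snd s))"

section \<open>Left bimodule connections\<close>

definition left_bimodule_connection_S :: "real \<Rightarrow> (pr \<Rightarrow> ten) \<Rightarrow> (ten \<Rightarrow> ten) \<Rightarrow> bool" where
  "left_bimodule_connection_S q nab sig \<longleftrightarrow>
     \<comment> \<open>nabla : S \<rightarrow> \<Omega>^1 \<otimes>_B S is a well-defined linear map\<close>
     (\<forall>s. wfS s \<longrightarrow> twf wfOm wfS (nab s)) \<and>
     (\<forall>s s'. wfS s \<longrightarrow> wfS s' \<longrightarrow> peq q s s' \<longrightarrow> teq q wfOm wfS (nab s) (nab s')) \<and>
     (\<forall>s s'. wfS s \<longrightarrow> wfS s' \<longrightarrow> teq q wfOm wfS (nab (padd s s')) (nab s @ nab s')) \<and>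
     (\<forall>k s. wfS s \<longrightarrow> teq q wfOm wfS (nab (psc k s)) (tsc k (nab s))) \<and>
     \<comment> \<open>left Leibniz rule\<close>
     (\<forall>b s. homog 0 b \<longrightarrow> wfS s \<longrightarrow>
        teq q wfOm wfS (nab (plmul b s)) ([(1, pd q b, s)] @ tlmul b (nab s))) \<and>
     \<comment> \<open>sigma : S \<otimes>_B \<Omega>^1 \<rightarrow> \<Omega>^1 \<otimes>_B S is a well-defined bimodule map\<close>
     (\<forall>t. twf wfS wfOm t \<longrightarrow> twf wfOm wfS (sig t)) \<and>
     (\<forall>t t'. twf wfS wfOm t \<longrightarrow> twf wfS wfOm t' \<longrightarrow> teq q wfS wfOm t t' \<longrightarrow>
        teq q wfOm wfS (sig t) (sig t')) \<and>
     (\<forall>t t'. twf wfS wfOm t \<longrightarrow> twf wfS wfOm t' \<longrightarrow>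
        teq q wfOm wfS (sig (t @ t')) (sig t @ sig t')) \<and>
     (\<forall>k t. twf wfS wfOm t \<longrightarrow> teq q wfOm wfS (sig (tsc k t)) (tsc k (sig t))) \<and>
     (\<forall>b t. homog 0 b \<longrightarrow> twf wfS wfOm t \<longrightarrow>
        teq q wfOm wfS (sig (tlmul b t)) (tlmul b (sig t))) \<and>
     (\<forall>b t. homog 0 b \<longrightarrow> twf wfS wfOm t \<longrightarrow>
        teq q wfOm wfS (sig (trmul t b)) (trmul (sig t) b)) \<and>
     \<comment> \<open>right (twisted) Leibniz rule\<close>
     (\<forall>b s. homog 0 b \<longrightarrow> wfS s \<longrightarrow>
        teq q wfOm wfS (nab (prmul s b)) (trmul (nab s) b @ sig [(1, s, pd q b)]))"

end

theory Submission
  imports Defs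
begin


definition gco :: "(complex \<times> 'a) list \<Rightarrow> 'a \<Rightarrow> complex" where
  "gco p w = sum_list (map (\<lambda>(c,u). if u = w then c else 0) p)"

lemma coef_gco: "coef = gco"
  by (rule ext)+ (simp add: coef_def gco_def)
lemma tcoef_gco: "tcoef = gco"
  by (rule ext)+ (simp add: tcoef_def gco_def)

lemma gco_Nil[simp]: "gco [] w = 0" by (simp add: gco_def)
lemma gco_Cons: "gco ((c,u)#p) w = (if u = w then c else 0) + gco p w" by (simp add: gco_def)
lemma gco_append[simp]: "gco (p@p') w = gco p w + gco p' w" by (simp add: gco_def)

lemma gco_rep:
  fixes F :: "complex \<Rightarrow> 'v \<Rightarrow> 'w::comm_monoid_add"
  assumes F0: "\<And>v. F 0 v = 0" and Fadd: "\<And>a b v. F (a+b) v = F a v + F b v"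
   and X: "finite X" "set (map snd p) \<subseteq> X"
  shows "sum_list (map (\<lambda>(c,u). F c (h u)) p) = (\<Sum>x\<in>X. F (gco p x) (h x))"
using X(2) proof (induction p)
  case Nil then show ?case by (simp add: F0)
next
  case (Cons a p) obtain c u where a: "a = (c,u)" by force
  have uX: "u \<in> X" using Cons a by auto
  have "(\<Sum>x\<in>X. F (gco ((c,u)#p) x) (h x)) = (\<Sum>x\<in>X. F (if u = x then c else 0) (h x)) + (\<Sum>x\<in>X. F (gco p x) (h x))"
    by (simp add: gco_Cons Fadd sum.distrib)
  also have "(\<Sum>x\<in>X. F (if u = x then c else 0) (h x)) = (\<Sum>x\<in>X. if u = x then F c (h x) else 0)"
    by (rule sum.cong) (auto simp: F0)
  also have "\<dots> = F c (h u)" using uX X(1) by simp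
  finally show ?case using Cons a by simp
qed

lemma gco_lin:
  fixes F :: "complex \<Rightarrow> 'v \<Rightarrow> 'w::comm_monoid_add"
  assumes F0: "\<And>v. F 0 v = 0" and Fadd: "\<And>a b v. F (a+b) v = F a v + F b v"
   and eq: "gco p = gco p'"
  shows "sum_list (map (\<lambda>(c,u). F c (h u)) p) = sum_list (map (\<lambda>(c,u). F c (h u)) p')"
proof -
  let ?X = "set (map snd p) \<union> set (map snd p')"
  have "sum_list (map (\<lambda>(c,u). F c (h u)) p) = (\<Sum>x\<in>?X. F (gco p x) (h x))"
    by (rule gco_rep[OF F0 Fadd]) auto
  also have "\<dots> = (\<Sum>x\<in>?X. F (gco p' x) (h x))" using eq by simp
  also have "\<dots> = sum_list (map (\<lambda>(c,u). F c (h u)) p')"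
    by (rule gco_rep[OF F0 Fadd, symmetric]) auto
  finally show ?thesis .
qed

lemma coef_Nil[simp]: "coef [] w = 0" by (simp add: coef_def)
lemma coef_Cons: "coef ((c,u)#p) w = (if u = w then c else 0) + coef p w" by (simp add: coef_def)
lemma coef_append[simp]: "coef (p@p') w = coef p w + coef p' w" by (simp add: coef_def)
lemma fsc_Nil[simp]: "fsc k [] = []" by (simp add: fsc_def)
lemma fsc_Cons[simp]: "fsc k ((c,u)#p) = (k*c,u) # fsc k p" by (simp add: fsc_def)
lemma fsc_append[simp]: "fsc k (p@p') = fsc k p @ fsc k p'" by (simp add: fsc_def)
lemma fsc_fsc[simp]: "fsc k (fsc l p) = fsc (k*l) p" by (induction p) auto
lemma fsc_1[simp]: "fsc 1 p = p" by (induction p) auto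
lemma coef_fsc[simp]: "coef (fsc k p) w = k * coef p w"
  by (induction p) (auto simp: coef_Cons algebra_simps)

lemma fmul_Nil1[simp]: "fmul [] p = []" by (simp add: fmul_def)
lemma fmul_Nil2[simp]: "fmul p [] = []" by (induction p) (auto simp: fmul_def)
lemma fmul_Cons1: "fmul ((c,u)#p) x = map (\<lambda>(c',u'). (c*c', u@u')) x @ fmul p x"
  by (simp add: fmul_def)
lemma fmul_append1[simp]: "fmul (p@p') x = fmul p x @ fmul p' x" by (simp add: fmul_def)
lemma fmul_single_single[simp]: "fmul [(c,u)] [(c',v)] = [(c*c', u@v)]" by (simp add: fmul_def)

lemma fmul_decomp: "fmul p x = concat (map (\<lambda>(c,u). fsc c (fmul [(1,u)] x)) p)"
  by (induction p) (auto simp: fmul_def fsc_def)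

lemma coef_concat_fsc:
  "coef (concat (map (\<lambda>(c,u). fsc c (f u)) p)) w = sum_list (map (\<lambda>(c,u). c * coef (f u) w) p)"
  by (induction p) auto

lemma coef_concat_fsc2:
  "coef (concat (map (\<lambda>(c,u). fsc (f c) (h u)) p)) w = sum_list (map (\<lambda>(c,u). f c * coef (h u) w) p)"
  by (induction p) auto

lemma coef_fmul1: "coef (fmul [(1,u)] x) w = (if take (length u) w = u then coef x (drop (length u) w) else 0)"
proof (induction x)
  case Nil then show ?case by simp
next
  case (Cons a x) obtain c v where a: "a = (c,v)" by force
  have "fmul [(1,u)] (a#x) = (c, u@v) # fmul [(1,u)] x" using a by (simp add: fmul_def)
  then show ?case using Cons a by (auto simp: coef_Cons append_eq_conv_conj)
qed

lemma coef_fmul: "coef (fmul p x) w =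
   sum_list (map (\<lambda>(c,u). c * (if take (length u) w = u then coef x (drop (length u) w) else 0)) p)"
  by (subst fmul_decomp) (simp add: coef_concat_fsc coef_fmul1)

lemma coef_fmul_cong2: assumes "coef x = coef x'" shows "coef (fmul p x) = coef (fmul p x')"
proof -
  have "\<And>w. coef x w = coef x' w" using assms by simp
  then have "coef (fmul p x) w = coef (fmul p x') w" for w
    by (induction p) (auto simp: coef_fmul)
  then show ?thesis by auto
qed

lemma coef_fmul_cong1: "coef p = coef p' \<Longrightarrow> coef (fmul p x) = coef (fmul p' x)"
  apply (rule ext)
  apply (simp only: coef_fmul)
  apply (rule gco_lin[where F="(*)"])
    apply (auto simp: coef_gco algebra_simps)
  done

lemma fmul_map1: "fmul (map (\<lambda>(c,u). (k*c, v@u)) p) x = map (\<lambda>(c,u). (k*c, v@u)) (fmul p x)"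
  by (induction p) (auto simp: fmul_def comp_def split_def mult.assoc)

lemma fmul_assoc: "fmul (fmul p x) y = fmul p (fmul x y)"
proof (induction p)
  case Nil then show ?case by simp
next
  case (Cons a p) obtain c u where a: "a = (c,u)" by force
  have "fmul (map (\<lambda>(c',u'). (c*c', u@u')) x) y = map (\<lambda>(c',u'). (c*c', u@u')) (fmul x y)"
    using fmul_map1 by blast
  then show ?case using Cons a by (simp add: fmul_Cons1)
qed

lemma coef_fmul_append2: "coef (fmul p (x@y)) w = coef (fmul p x) w + coef (fmul p y) w"
  by (induction p) (auto simp: coef_fmul algebra_simps)

lemma fmul_one1[simp]: "fmul [(1,[])] x = x" by (induction x) (auto simp: fmul_def)
lemma coef_fmul_one2: "coef (fmul x [(1,[])]) = coef x"
  by (rule ext, induction x) (auto simp: fmul_def coef_Cons)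
lemma fmul_fsc1: "fmul (fsc k p) x = fsc k (fmul p x)"
  by (induction p) (auto simp: fmul_def fsc_def comp_def split_def mult.assoc)
lemma fmul_fsc2: "fmul p (fsc k x) = fsc k (fmul p x)"
  by (induction p) (auto simp: fmul_def fsc_def comp_def split_def algebra_simps)
lemma fmul_const2: "fmul x [(k,[])] = fsc k x"
  by (induction x) (auto simp: fmul_def fsc_def mult.commute)
lemma fmul_const1: "fmul [(k,[])] x = fsc k x"
  by (induction x) (auto simp: fmul_def fsc_def)

section \<open>The free algebra as a ring\<close>

definition ceq :: "fa \<Rightarrow> fa \<Rightarrow> bool" where "ceq p p' \<longleftrightarrow> coef p = coef p'"

lemma ceq_refl[simp]: "ceq p p" by (simp add: ceq_def)

quotient_type fp = fa / ceq
  morphisms rep_fp abs_fp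
  by (auto intro!: equivpI reflpI sympI transpI simp: ceq_def)

instantiation fp :: ring_1
begin
lift_definition zero_fp :: fp is "[]" .
lift_definition one_fp :: fp is "[(1,[])]" .
lift_definition plus_fp :: "fp \<Rightarrow> fp \<Rightarrow> fp" is "\<lambda>p p'. p @ p'"
  by (simp add: ceq_def fun_eq_iff)
lift_definition uminus_fp :: "fp \<Rightarrow> fp" is "fsc (-1)"
  by (simp add: ceq_def fun_eq_iff)
lift_definition minus_fp :: "fp \<Rightarrow> fp \<Rightarrow> fp" is "\<lambda>p p'. p @ fsc (-1) p'"
  by (simp add: ceq_def fun_eq_iff)
lift_definition times_fp :: "fp \<Rightarrow> fp \<Rightarrow> fp" is fmul
  unfolding ceq_def by (metis coef_fmul_cong1 coef_fmul_cong2)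
instance
proof
  fix a b c :: fp
  show "a * b * c = a * (b * c)" by transfer (simp add: ceq_def fmul_assoc)
  show "1 * a = a" by transfer (simp add: ceq_def)
  show "a * 1 = a" by transfer (simp add: ceq_def coef_fmul_one2)
  show "(a + b) * c = a * c + b * c" by transfer (simp add: ceq_def)
  show "a * (b + c) = a * b + a * c" by transfer (simp add: ceq_def coef_fmul_append2 fun_eq_iff)
  show "a + b + c = a + (b + c)" by transfer (simp add: ceq_def)
  show "a + b = b + a" by transfer (simp add: ceq_def fun_eq_iff)
  show "0 + a = a" by transfer (simp add: ceq_def)
  show "- a + a = 0" by transfer (simp add: ceq_def fun_eq_iff)
  show "a - b = a + - b" by transfer (simp add: ceq_def)
  show "(0::fp) \<noteq> 1" by transfer (simp add: ceq_def fun_eq_iff coef_Cons)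
qed
end

lift_definition cst :: "complex \<Rightarrow> fp" is "\<lambda>k. [(k,[])]" .
lift_definition mn :: "word \<Rightarrow> fp" is "\<lambda>u. [(1,u)]" .

lemma abs_fp_Nil[simp]: "abs_fp [] = 0" by (simp add: zero_fp_def)
lemma abs_fp_append[simp]: "abs_fp (p@p') = abs_fp p + abs_fp p'"
  by (metis plus_fp.abs_eq)
lemma abs_fp_fmul[simp]: "abs_fp (fmul p p') = abs_fp p * abs_fp p'"
  by (metis times_fp.abs_eq)
lemma abs_fp_fsc[simp]: "abs_fp (fsc k p) = cst k * abs_fp p"
  by (metis cst.abs_eq times_fp.abs_eq fmul_const1)
lemma abs_fp_Cons: "abs_fp ((c,u)#p) = cst c * mn u + abs_fp p"
proof -
  have "abs_fp ((c,u)#p) = abs_fp [(c,u)] + abs_fp p" by (metis abs_fp_append append_Cons append_Nil)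
  also have "abs_fp [(c,u)] = cst c * mn u"
    by (simp add: cst.abs_eq mn.abs_eq del: abs_fp_fmul flip: abs_fp_fmul)
  finally show ?thesis .
qed
lemma abs_fp_eq_iff: "abs_fp p = abs_fp p' \<longleftrightarrow> coef p = coef p'"
  by (simp add: ceq_def fp.abs_eq_iff)

lemma cst_add: "cst (a+b) = cst a + cst b" by transfer (simp add: ceq_def fun_eq_iff coef_Cons)
lemma cst_mult: "cst (a*b) = cst a * cst b" by transfer (simp add: ceq_def fun_eq_iff coef_Cons)
lemma cst_0[simp]: "cst 0 = 0" by transfer (simp add: ceq_def fun_eq_iff coef_Cons)
lemma cst_1[simp]: "cst 1 = 1" by transfer simp
lemma cst_uminus: "cst (-a) = - cst a" by (metis add_eq_0_iff2 cst_0 cst_add neg_eq_iff_add_eq_0)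
lemma cst_diff: "cst (a-b) = cst a - cst b" by (metis cst_add cst_uminus diff_conv_add_uminus)
lemma cst_comm: "cst k * x = x * cst k"
  by transfer (simp add: fmul_const1 fmul_const2)
lemma mn_append: "mn (u@v) = mn u * mn v" by transfer simp
lemma mn_Nil[simp]: "mn [] = 1" by transfer simp
lemma abs_fp_fneg[simp]: "abs_fp (fneg p) = - abs_fp p" by (simp add: fneg_def cst_uminus)
lemma abs_fp_fsub[simp]: "abs_fp (fsub p p') = abs_fp p - abs_fp p'"
  by (simp add: fsub_def cst_uminus)
lemma abs_fp_fadd[simp]: "abs_fp (fadd p p') = abs_fp p + abs_fp p'" by (simp add: fadd_def)
lemma abs_fp_fconst[simp]: "abs_fp (fconst k) = cst k" by (simp add: fconst_def cst.abs_eq)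

definition sc :: "complex \<Rightarrow> fp \<Rightarrow> fp" where "sc k x = cst k * x"

lemma sc_mult_left[simp]: "sc k x * y = sc k (x*y)" by (simp add: sc_def mult.assoc)
lemma sc_mult_right[simp]: "x * sc k y = sc k (x*y)"
  by (metis sc_def cst_comm mult.assoc)
lemma sc_sc[simp]: "sc k (sc l x) = sc (k*l) x" by (simp add: sc_def cst_mult mult.assoc)
lemma sc_add[simp]: "sc k (x+y) = sc k x + sc k y" by (simp add: sc_def algebra_simps)
lemma sc_diff[simp]: "sc k (x-y) = sc k x - sc k y" by (simp add: sc_def algebra_simps)
lemma sc_uminus[simp]: "sc k (-x) = - sc k x" by (simp add: sc_def algebra_simps)
lemma sc_1[simp]: "sc 1 x = x" by (simp add: sc_def)
lemma sc_0[simp]: "sc 0 x = 0" by (simp add: sc_def)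
lemma sc_zero[simp]: "sc k 0 = 0" by (simp add: sc_def)
lemma sc_addk: "sc (k+l) x = sc k x + sc l x" by (simp add: sc_def cst_add algebra_simps)
lemma sc_diffk: "sc (k-l) x = sc k x - sc l x" by (simp add: sc_def cst_diff algebra_simps)
lemma sc_neg: "sc (-k) x = - sc k x" by (simp add: sc_def cst_uminus)
lemma abs_fp_fsc'[simp]: "abs_fp (fsc k p) = sc k (abs_fp p)" by (simp add: sc_def)
declare abs_fp_fsc[simp del]
lemma abs_fgen[simp]: "abs_fp (fgen g) = mn [g]" by (simp add: fgen_def mn.abs_eq)

lemma fsc_concat: "fsc k (concat xs) = concat (map (fsc k) xs)" by (induction xs) auto

lemma wdeg_Nil[simp]: "wdeg [] = 0" by (simp add: wdeg_def)
lemma wdeg_Cons[simp]: "wdeg (g#w) = gdeg g + wdeg w" by (simp add: wdeg_def)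
lemma wdeg_append[simp]: "wdeg (u@v) = wdeg u + wdeg v" by (simp add: wdeg_def)

section \<open>Derivations on the free algebra\<close>

definition dgl :: "(gen \<Rightarrow> fa) \<Rightarrow> real \<Rightarrow> fa \<Rightarrow> fa" where
  "dgl dg q p = concat (map (\<lambda>(c,u). fsc c (wder dg q u)) p)"

lemma dplus_dgl: "dplus q = dgl (dplus_gen q) q" by (rule ext) (simp add: dplus_def dgl_def)
lemma dminus_dgl: "dminus q = dgl (dminus_gen q) q" by (rule ext) (simp add: dminus_def dgl_def)

lift_definition Dg :: "(gen \<Rightarrow> fa) \<Rightarrow> real \<Rightarrow> fp \<Rightarrow> fp" is dgl
proof -
  fix dg q p p' assume "ceq p p'"
  then have "gco p = gco p'" by (simp add: ceq_def coef_gco)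
  then have "\<And>w. sum_list (map (\<lambda>(c,u). c * coef (wder dg q u) w) p) = sum_list (map (\<lambda>(c,u). c * coef (wder dg q u) w) p')"
    by (intro gco_lin[where F="(*)"]) (auto simp: algebra_simps)
  then show "ceq (dgl dg q p) (dgl dg q p')"
    by (simp add: ceq_def dgl_def coef_concat_fsc fun_eq_iff)
qed

lemma Dg_add[simp]: "Dg dg q (x + y) = Dg dg q x + Dg dg q y"
  by transfer (simp add: dgl_def)
lemma dgl_fsc: "dgl dg q (fsc k p) = fsc k (dgl dg q p)"
  by (induction p) (auto simp: dgl_def)
lemma Dg_cst: "Dg dg q (cst k * x) = cst k * Dg dg q x"
  by transfer (simp add: fmul_const1 dgl_fsc)
lemma Dg_sc[simp]: "Dg dg q (sc k x) = sc k (Dg dg q x)"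
  by (simp add: sc_def Dg_cst)
lemma Dg_0[simp]: "Dg dg q 0 = 0"
  by transfer (simp add: dgl_def)
lemma Dg_uminus[simp]: "Dg dg q (- x) = - Dg dg q x"
  by (metis Dg_add Dg_0 add_eq_0_iff2 neg_eq_iff_add_eq_0)
lemma Dg_diff[simp]: "Dg dg q (x - y) = Dg dg q x - Dg dg q y"
  by (metis Dg_add Dg_uminus diff_conv_add_uminus)
lemma Dg_mono: "Dg dg q (mn u) = abs_fp (wder dg q u)"
  by (simp add: mn.abs_eq Dg.abs_eq dgl_def)

lemma Dg_mono_Cons: "Dg dg q (mn (g#w)) = sc (of_real (q powi wdeg w)) (abs_fp (dg g) * mn w) + mn [g] * Dg dg q (mn w)"
  unfolding Dg_mono wder.simps fadd_def abs_fp_append abs_fp_fsc' abs_fp_fmul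
  by (simp add: mn.abs_eq[symmetric])
lemma Dg_1[simp]: "Dg dg q 1 = 0"
  by (metis Dg_mono mn_Nil wder.simps(1) abs_fp_Nil)

lemma mn_Cons: "mn (g#w) = mn [g] * mn w" by (metis append_Cons append_Nil mn_append)

lemma ofr_pow_add: "q \<noteq> 0 \<Longrightarrow> complex_of_real (q powi (m+n)) = complex_of_real (q powi m) * complex_of_real (q powi n)"
  by (simp add: power_int_add)

lemma Dg_word_leibniz: assumes "q \<noteq> 0"
  shows "Dg dg q (mn (u@v)) = sc (of_real (q powi wdeg v)) (Dg dg q (mn u) * mn v) + mn u * Dg dg q (mn v)"
proof (induction u)
  case Nil then show ?case by simp
next
  case (Cons g u)
  have "Dg dg q (mn ((g#u)@v)) = sc (of_real (q powi (wdeg u + wdeg v))) (abs_fp (dg g) * mn (u@v)) + mn [g] * Dg dg q (mn (u@v))"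
    using Dg_mono_Cons[of dg q g "u@v"] by simp
  also have "\<dots> = sc (of_real (q powi wdeg v)) (Dg dg q (mn (g#u)) * mn v) + (mn [g] * mn u) * Dg dg q (mn v)"
    unfolding Cons.IH unfolding Dg_mono_Cons ofr_pow_add[OF assms] mn_append
    by (simp add: algebra_simps)
  also have "mn [g] * mn u = mn (g#u)" by (simp flip: mn_append)
  finally show ?case .
qed

lemma abs_fp_Cons': "abs_fp ((c,u)#p) = sc c (mn u) + abs_fp p"
  by (simp add: abs_fp_Cons sc_def)
lemma fp_abs_ex: "\<exists>p. x = abs_fp p"
  by (metis Quotient_abs_rep Quotient_fp)

definition hom :: "int \<Rightarrow> fp \<Rightarrow> bool" where
  "hom n x \<longleftrightarrow> (\<exists>p. homog n p \<and> x = abs_fp p)"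

lemma homog_Nil[simp]: "homog n []" by (simp add: homog_def)
lemma homog_Cons[simp]: "homog n ((c,u)#p) \<longleftrightarrow> wdeg u = n \<and> homog n p" by (simp add: homog_def)
lemma homog_append[simp]: "homog n (p@p') \<longleftrightarrow> homog n p \<and> homog n p'" by (auto simp: homog_def)

lemma Dg_leibniz1: assumes "q \<noteq> 0" "homog n p'"
  shows "Dg dg q (mn u * abs_fp p') = sc (of_real (q powi n)) (Dg dg q (mn u) * abs_fp p') + mn u * Dg dg q (abs_fp p')"
using assms(2) proof (induction p')
  case Nil then show ?case by simp
next
  case (Cons a p') obtain c v where a: "a = (c,v)" by force
  then have v: "wdeg v = n" "homog n p'" using Cons by auto
  show ?case using Cons.IH[OF v(2)] Dg_word_leibniz[OF assms(1), of dg u v]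
    by (simp add: a abs_fp_Cons' algebra_simps v(1) flip: mn_append)
qed

lemma Dg_leibniz: assumes "q \<noteq> 0" "hom n y"
  shows "Dg dg q (x * y) = sc (of_real (q powi n)) (Dg dg q x * y) + x * Dg dg q y"
proof -
  obtain p' where p': "homog n p'" "y = abs_fp p'" using assms(2) hom_def by auto
  obtain p where p: "x = abs_fp p" using fp_abs_ex by auto
  show ?thesis unfolding p p'(2)
  proof (induction p)
    case Nil then show ?case by simp
  next
    case (Cons a p) obtain c u where a: "a = (c,u)" by force
    show ?case using Cons.IH Dg_leibniz1[OF assms(1) p'(1), of dg u]
      by (simp add: a abs_fp_Cons' algebra_simps)
  qed
qed

lift_definition St :: "real \<Rightarrow> fp \<Rightarrow> fp" is fstar
proof -
  fix q p p' assume "ceq p p'"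
  then have "gco p = gco p'" by (simp add: ceq_def coef_gco)
  then have "\<And>w. sum_list (map (\<lambda>(c,u). cnj c * coef (wstar q u) w) p) = sum_list (map (\<lambda>(c,u). cnj c * coef (wstar q u) w) p')"
    by (intro gco_lin[where F="\<lambda>c v. cnj c * v"]) (auto simp: algebra_simps)
  then show "ceq (fstar q p) (fstar q p')"
    by (simp add: ceq_def fstar_def coef_concat_fsc fun_eq_iff coef_concat_fsc2)
qed

lemma fstar_append: "fstar q (p@p') = fstar q p @ fstar q p'" by (simp add: fstar_def)
lemma fstar_fsc: "fstar q (fsc k p) = fsc (cnj k) (fstar q p)"
  by (induction p) (auto simp: fstar_def)

lemma St_add[simp]: "St q (x + y) = St q x + St q y"
  by transfer (simp add: fstar_append)
lemma St_sc[simp]: "St q (sc k x) = sc (cnj k) (St q x)"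
  unfolding sc_def by transfer (simp add: fmul_const1 fstar_fsc)
lemma St_0[simp]: "St q 0 = 0" by transfer (simp add: fstar_def)
lemma St_uminus[simp]: "St q (- x) = - St q x"
  by (metis St_add St_0 add_eq_0_iff2 neg_eq_iff_add_eq_0)
lemma St_diff[simp]: "St q (x - y) = St q x - St q y"
  by (metis St_add St_uminus diff_conv_add_uminus)
lemma St_mn: "St q (mn u) = abs_fp (wstar q u)"
  by (simp add: mn.abs_eq St.abs_eq fstar_def)
lemma St_mn_Cons: "St q (mn (g#w)) = St q (mn w) * abs_fp (gstar q g)"
  by (simp add: St_mn)
lemma St_1[simp]: "St q 1 = 1"
  by (metis St_mn mn_Nil wstar.simps(1) abs_fp_fconst cst_1)
lemma St_gen: "St q (mn [g]) = abs_fp (gstar q g)"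
  using St_mn_Cons[of q g "[]"] by simp

lemma St_word: "St q (mn (u@v)) = St q (mn v) * St q (mn u)"
proof (induction u)
  case Nil then show ?case by simp
next
  case (Cons g u) then show ?case
    using St_mn_Cons[of q g "u@v"] St_mn_Cons[of q g u] by (simp add: mult.assoc)
qed

lemma St_mult: "St q (x * y) = St q y * St q x"
proof -
  obtain p where p: "x = abs_fp p" using fp_abs_ex by auto
  obtain p' where p': "y = abs_fp p'" using fp_abs_ex by auto
  have 1: "St q (mn u * abs_fp p') = St q (abs_fp p') * St q (mn u)" for u
    by (induction p') (auto simp: abs_fp_Cons' algebra_simps St_word simp flip: mn_append)
  show ?thesis unfolding p p'
    by (induction p) (auto simp: abs_fp_Cons' algebra_simps 1)
qed

lemma gstar_vals:
  "abs_fp (gstar q GA) = mn [GD]" "abs_fp (gstar q GB) = sc (- inverse (of_real q)) (mn [GC])"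
  "abs_fp (gstar q GC) = sc (- of_real q) (mn [GB])" "abs_fp (gstar q GD) = mn [GA]"
  by simp_all

lemma St_St_gen: "q \<noteq> 0 \<Longrightarrow> St q (St q (mn [g])) = mn [g]"
  by (cases g) (simp_all add: St_gen)

lemma St_St: assumes "q \<noteq> 0" shows "St q (St q x) = x"
proof -
  obtain p where p: "x = abs_fp p" using fp_abs_ex by auto
  have 1: "St q (St q (mn u)) = mn u" for u
  proof (induction u)
    case Nil then show ?case by simp
  next
    case (Cons g u) then show ?case
      by (subst (1 2) mn_Cons) (simp add: St_mult St_St_gen[OF assms])
  qed
  show ?thesis unfolding p
    by (induction p) (auto simp: abs_fp_Cons' 1)
qed

section \<open>The ideal\<close>

definition Iq :: "real \<Rightarrow> fp set" where "Iq q = abs_fp ` qideal q"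

lemma qideal_lmul: "r \<in> qideal q \<Longrightarrow> fmul [(1,u)] r \<in> qideal q"
proof (induction rule: qideal.induct)
  case qideal_nil then show ?case by (simp add: qideal.qideal_nil)
next
  case (qideal_gen i u' v)
  have "fmul [(1,u)] (fmul (fmul [(1,u')] (qrels q ! i)) [(1,v)]) = fmul (fmul [(1,u@u')] (qrels q ! i)) [(1,v)]"
    by (simp flip: fmul_assoc)
  then show ?case using qideal_gen by (simp add: qideal.qideal_gen)
next
  case (qideal_add p p') then show ?case using qideal.qideal_add by (simp add: fmul_Cons1)
next
  case (qideal_sc p k) then show ?case using qideal.qideal_sc by (simp add: fmul_fsc2)
qed

lemma qideal_rmul: "r \<in> qideal q \<Longrightarrow> fmul r [(1,v)] \<in> qideal q"
proof (induction rule: qideal.induct)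
  case qideal_nil then show ?case by (simp add: qideal.qideal_nil)
next
  case (qideal_gen i u v')
  have "fmul (fmul (fmul [(1,u)] (qrels q ! i)) [(1,v')]) [(1,v)] = fmul (fmul [(1,u)] (qrels q ! i)) [(1,v'@v)]"
    by (simp add: fmul_assoc)
  then show ?case using qideal_gen by (simp add: qideal.qideal_gen)
next
  case (qideal_add p p') then show ?case using qideal.qideal_add by simp
next
  case (qideal_sc p k) then show ?case using qideal.qideal_sc by (simp add: fmul_fsc1)
qed

lemma Iq_0[simp]: "0 \<in> Iq q" unfolding Iq_def using qideal_nil abs_fp_Nil by (metis image_eqI)
lemma Iq_add: "x \<in> Iq q \<Longrightarrow> y \<in> Iq q \<Longrightarrow> x + y \<in> Iq q"
  unfolding Iq_def by (auto intro!: image_eqI[where x="_ @ _"] qideal_add)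
lemma Iq_sc: "x \<in> Iq q \<Longrightarrow> sc k x \<in> Iq q"
  unfolding Iq_def by (auto intro!: image_eqI[where x="fsc _ _"] qideal_sc)
lemma Iq_uminus: "x \<in> Iq q \<Longrightarrow> - x \<in> Iq q"
  using Iq_sc[of x q "-1"] by (simp add: sc_neg)
lemma Iq_diff: "x \<in> Iq q \<Longrightarrow> y \<in> Iq q \<Longrightarrow> x - y \<in> Iq q"
  by (metis Iq_add Iq_uminus diff_conv_add_uminus)
lemma Iq_lmn: "x \<in> Iq q \<Longrightarrow> mn u * x \<in> Iq q"
  unfolding Iq_def by (auto simp: mn.abs_eq intro!: image_eqI[where x="fmul _ _"] qideal_lmul)
lemma Iq_rmn: "x \<in> Iq q \<Longrightarrow> x * mn u \<in> Iq q"
  unfolding Iq_def by (auto simp: mn.abs_eq intro!: image_eqI[where x="fmul _ _"] qideal_rmul)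
lemma Iq_lmul: assumes "x \<in> Iq q" shows "y * x \<in> Iq q"
proof -
  obtain p where p: "y = abs_fp p" using fp_abs_ex by auto
  show ?thesis unfolding p
    by (induction p) (auto simp: abs_fp_Cons' algebra_simps Iq_add Iq_sc Iq_lmn assms)
qed
lemma Iq_rmul: assumes "x \<in> Iq q" shows "x * y \<in> Iq q"
proof -
  obtain p where p: "y = abs_fp p" using fp_abs_ex by auto
  show ?thesis unfolding p
    by (induction p) (auto simp: abs_fp_Cons' algebra_simps Iq_add Iq_sc Iq_rmn assms)
qed
lemma abs_one[simp]: "abs_fp [(1,[])] = 1" by (metis one_fp.abs_eq)
lemma Iq_rel: assumes "i < length (qrels q)" shows "abs_fp (qrels q ! i) \<in> Iq q"
proof -
  have m: "fmul (fmul [(1,[])] (qrels q ! i)) [(1,[])] \<in> qideal q" using assms by (rule qideal_gen)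
  have e: "abs_fp (fmul (fmul [(1,[])] (qrels q ! i)) [(1,[])]) = abs_fp (qrels q ! i)"
    by (simp only: fmul_one1 abs_fp_fmul abs_one mult_1_right)
  show ?thesis unfolding Iq_def by (rule image_eqI[where f=abs_fp, OF e[symmetric] m])
qed

definition dl :: "word \<Rightarrow> word \<Rightarrow> complex" where "dl u w = (if u = w then 1 else 0)"
lemma coef_Cons_dl: "coef ((c,u)#p) w = c * dl u w + coef p w" by (simp add: coef_Cons dl_def)

lemma to_list:
  "mn u = abs_fp [(1,u)]" "sc k (abs_fp p) = abs_fp (fsc k p)"
  "abs_fp p + abs_fp p' = abs_fp (p @ p')" "abs_fp p * abs_fp p' = abs_fp (fmul p p')"
  "abs_fp p - abs_fp p' = abs_fp (p @ fsc (-1) p')" "- abs_fp p = abs_fp (fsc (-1) p)"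
  "(1::fp) = abs_fp [(1,[])]" "(0::fp) = abs_fp []"
  "Dg dg q (abs_fp p) = abs_fp (dgl dg q p)" "St q (abs_fp p) = abs_fp (fstar q p)"
  subgoal by (rule mn.abs_eq)
  subgoal by simp
  subgoal by simp
  subgoal by simp
  subgoal by (simp add: sc_neg)
  subgoal by (simp add: sc_neg)
  subgoal by simp
  subgoal by simp
  subgoal by (rule Dg.abs_eq)
  subgoal by (rule St.abs_eq)
  done

abbreviation "gA \<equiv> mn [GA]"
abbreviation "gB \<equiv> mn [GB]"
abbreviation "gC \<equiv> mn [GC]"
abbreviation "gD \<equiv> mn [GD]"

definition rel :: "real \<Rightarrow> nat \<Rightarrow> fp" where "rel q i = abs_fp (qrels q ! i)"

lemma rel_Iq: "i < 7 \<Longrightarrow> rel q i \<in> Iq q"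
  unfolding rel_def by (rule Iq_rel) (simp add: qrels_def Let_def)

lemma Dp_rel0: "q \<noteq> 0 \<Longrightarrow> Dg (dplus_gen q) q (rel q 0) = 0"
  apply (simp only: to_list rel_def)
  apply (rule iffD2[OF abs_fp_eq_iff])
  apply (simp add: fun_eq_iff coef_Cons_dl fmul_def qrels_def Let_def
     fsub_def fneg_def fconst_def fgen_def dgl_def fstar_def fadd_def)
  apply ((simp add: field_simps power2_eq_square)?)
  done

lemma Dp_rel1: "q \<noteq> 0 \<Longrightarrow> Dg (dplus_gen q) q (rel q 1) = sc ((of_real q)^2) (rel q 5) - sc (of_real q) (rel q 4)"
  apply (simp only: to_list rel_def)
  apply (rule iffD2[OF abs_fp_eq_iff])
  apply (simp add: fun_eq_iff coef_Cons_dl fmul_def qrels_def Let_def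
     fsub_def fneg_def fconst_def fgen_def dgl_def fstar_def fadd_def)
  apply ((simp add: field_simps power2_eq_square)?)
  done

lemma Dp_rel2: "q \<noteq> 0 \<Longrightarrow> Dg (dplus_gen q) q (rel q 2) = 0"
  apply (simp only: to_list rel_def)
  apply (rule iffD2[OF abs_fp_eq_iff])
  apply (simp add: fun_eq_iff coef_Cons_dl fmul_def qrels_def Let_def
     fsub_def fneg_def fconst_def fgen_def dgl_def fstar_def fadd_def)
  apply ((simp add: field_simps power2_eq_square)?)
  done

lemma Dp_rel3: "q \<noteq> 0 \<Longrightarrow> Dg (dplus_gen q) q (rel q 3) = 0"
  apply (simp only: to_list rel_def)
  apply (rule iffD2[OF abs_fp_eq_iff])
  apply (simp add: fun_eq_iff coef_Cons_dl fmul_def qrels_def Let_def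
     fsub_def fneg_def fconst_def fgen_def dgl_def fstar_def fadd_def)
  apply ((simp add: field_simps power2_eq_square)?)
  done

lemma Dp_rel4: "q \<noteq> 0 \<Longrightarrow> Dg (dplus_gen q) q (rel q 4) = - rel q 2"
  apply (simp only: to_list rel_def)
  apply (rule iffD2[OF abs_fp_eq_iff])
  apply (simp add: fun_eq_iff coef_Cons_dl fmul_def qrels_def Let_def
     fsub_def fneg_def fconst_def fgen_def dgl_def fstar_def fadd_def)
  apply ((simp add: field_simps power2_eq_square)?)
  done

lemma Dp_rel5: "q \<noteq> 0 \<Longrightarrow> Dg (dplus_gen q) q (rel q 5) = sc (of_real q) (rel q 2)"
  apply (simp only: to_list rel_def)
  apply (rule iffD2[OF abs_fp_eq_iff])
  apply (simp add: fun_eq_iff coef_Cons_dl fmul_def qrels_def Let_def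
     fsub_def fneg_def fconst_def fgen_def dgl_def fstar_def fadd_def)
  apply ((simp add: field_simps power2_eq_square)?)
  done

lemma Dp_rel6: "q \<noteq> 0 \<Longrightarrow> Dg (dplus_gen q) q (rel q 6) = 0"
  apply (simp only: to_list rel_def)
  apply (rule iffD2[OF abs_fp_eq_iff])
  apply (simp add: fun_eq_iff coef_Cons_dl fmul_def qrels_def Let_def
     fsub_def fneg_def fconst_def fgen_def dgl_def fstar_def fadd_def)
  apply ((simp add: field_simps power2_eq_square)?)
  done

lemma Dm_rel0: "q \<noteq> 0 \<Longrightarrow> Dg (dminus_gen q) q (rel q 0) = 0"
  apply (simp only: to_list rel_def)
  apply (rule iffD2[OF abs_fp_eq_iff])
  apply (simp add: fun_eq_iff coef_Cons_dl fmul_def qrels_def Let_def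
     fsub_def fneg_def fconst_def fgen_def dgl_def fstar_def fadd_def)
  apply ((simp add: field_simps power2_eq_square)?)
  done

lemma Dm_rel1: "q \<noteq> 0 \<Longrightarrow> Dg (dminus_gen q) q (rel q 1) = 0"
  apply (simp only: to_list rel_def)
  apply (rule iffD2[OF abs_fp_eq_iff])
  apply (simp add: fun_eq_iff coef_Cons_dl fmul_def qrels_def Let_def
     fsub_def fneg_def fconst_def fgen_def dgl_def fstar_def fadd_def)
  apply ((simp add: field_simps power2_eq_square)?)
  done

lemma Dm_rel2: "q \<noteq> 0 \<Longrightarrow> Dg (dminus_gen q) q (rel q 2) = rel q 5 - sc (inverse (of_real q)) (rel q 4)"
  apply (simp only: to_list rel_def)
  apply (rule iffD2[OF abs_fp_eq_iff])
  apply (simp add: fun_eq_iff coef_Cons_dl fmul_def qrels_def Let_def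
     fsub_def fneg_def fconst_def fgen_def dgl_def fstar_def fadd_def)
  apply ((simp add: field_simps power2_eq_square)?)
  done

lemma Dm_rel3: "q \<noteq> 0 \<Longrightarrow> Dg (dminus_gen q) q (rel q 3) = 0"
  apply (simp only: to_list rel_def)
  apply (rule iffD2[OF abs_fp_eq_iff])
  apply (simp add: fun_eq_iff coef_Cons_dl fmul_def qrels_def Let_def
     fsub_def fneg_def fconst_def fgen_def dgl_def fstar_def fadd_def)
  apply ((simp add: field_simps power2_eq_square)?)
  done

lemma Dm_rel4: "q \<noteq> 0 \<Longrightarrow> Dg (dminus_gen q) q (rel q 4) = - rel q 1"
  apply (simp only: to_list rel_def)
  apply (rule iffD2[OF abs_fp_eq_iff])
  apply (simp add: fun_eq_iff coef_Cons_dl fmul_def qrels_def Let_def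
     fsub_def fneg_def fconst_def fgen_def dgl_def fstar_def fadd_def)
  apply ((simp add: field_simps power2_eq_square)?)
  done

lemma Dm_rel5: "q \<noteq> 0 \<Longrightarrow> Dg (dminus_gen q) q (rel q 5) = sc (of_real q) (rel q 1)"
  apply (simp only: to_list rel_def)
  apply (rule iffD2[OF abs_fp_eq_iff])
  apply (simp add: fun_eq_iff coef_Cons_dl fmul_def qrels_def Let_def
     fsub_def fneg_def fconst_def fgen_def dgl_def fstar_def fadd_def)
  apply ((simp add: field_simps power2_eq_square)?)
  done

lemma Dm_rel6: "q \<noteq> 0 \<Longrightarrow> Dg (dminus_gen q) q (rel q 6) = 0"
  apply (simp only: to_list rel_def)
  apply (rule iffD2[OF abs_fp_eq_iff])
  apply (simp add: fun_eq_iff coef_Cons_dl fmul_def qrels_def Let_def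
     fsub_def fneg_def fconst_def fgen_def dgl_def fstar_def fadd_def)
  apply ((simp add: field_simps power2_eq_square)?)
  done

lemma St_rel0: "q \<noteq> 0 \<Longrightarrow> St q (rel q 0) = sc (- (inverse (of_real q))) (rel q 3)"
  apply (simp only: to_list rel_def)
  apply (rule iffD2[OF abs_fp_eq_iff])
  apply (simp add: fun_eq_iff coef_Cons_dl fmul_def qrels_def Let_def
     fsub_def fneg_def fconst_def fgen_def dgl_def fstar_def fadd_def)
  apply ((simp add: field_simps power2_eq_square)?)
  done

lemma St_rel1: "q \<noteq> 0 \<Longrightarrow> St q (rel q 1) = sc (- (of_real q)) (rel q 2)"
  apply (simp only: to_list rel_def)
  apply (rule iffD2[OF abs_fp_eq_iff])
  apply (simp add: fun_eq_iff coef_Cons_dl fmul_def qrels_def Let_def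
     fsub_def fneg_def fconst_def fgen_def dgl_def fstar_def fadd_def)
  apply ((simp add: field_simps power2_eq_square)?)
  done

lemma St_rel2: "q \<noteq> 0 \<Longrightarrow> St q (rel q 2) = sc (- (inverse (of_real q))) (rel q 1)"
  apply (simp only: to_list rel_def)
  apply (rule iffD2[OF abs_fp_eq_iff])
  apply (simp add: fun_eq_iff coef_Cons_dl fmul_def qrels_def Let_def
     fsub_def fneg_def fconst_def fgen_def dgl_def fstar_def fadd_def)
  apply ((simp add: field_simps power2_eq_square)?)
  done

lemma St_rel3: "q \<noteq> 0 \<Longrightarrow> St q (rel q 3) = sc (- (of_real q)) (rel q 0)"
  apply (simp only: to_list rel_def)
  apply (rule iffD2[OF abs_fp_eq_iff])
  apply (simp add: fun_eq_iff coef_Cons_dl fmul_def qrels_def Let_def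
     fsub_def fneg_def fconst_def fgen_def dgl_def fstar_def fadd_def)
  apply ((simp add: field_simps power2_eq_square)?)
  done

lemma St_rel4: "q \<noteq> 0 \<Longrightarrow> St q (rel q 4) = rel q 4"
  apply (simp only: to_list rel_def)
  apply (rule iffD2[OF abs_fp_eq_iff])
  apply (simp add: fun_eq_iff coef_Cons_dl fmul_def qrels_def Let_def
     fsub_def fneg_def fconst_def fgen_def dgl_def fstar_def fadd_def)
  apply ((simp add: field_simps power2_eq_square)?)
  done

lemma St_rel5: "q \<noteq> 0 \<Longrightarrow> St q (rel q 5) = rel q 5"
  apply (simp only: to_list rel_def)
  apply (rule iffD2[OF abs_fp_eq_iff])
  apply (simp add: fun_eq_iff coef_Cons_dl fmul_def qrels_def Let_def
     fsub_def fneg_def fconst_def fgen_def dgl_def fstar_def fadd_def)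
  apply ((simp add: field_simps power2_eq_square)?)
  done

lemma St_rel6: "q \<noteq> 0 \<Longrightarrow> St q (rel q 6) = rel q 6"
  apply (simp only: to_list rel_def)
  apply (rule iffD2[OF abs_fp_eq_iff])
  apply (simp add: fun_eq_iff coef_Cons_dl fmul_def qrels_def Let_def
     fsub_def fneg_def fconst_def fgen_def dgl_def fstar_def fadd_def)
  apply ((simp add: field_simps power2_eq_square)?)
  done

lemma less7: "(i::nat) < 7 \<Longrightarrow> i = 0 \<or> i = 1 \<or> i = 2 \<or> i = 3 \<or> i = 4 \<or> i = 5 \<or> i = 6" by auto

definition reldeg :: "nat \<Rightarrow> int" where "reldeg i = (if i = 1 then 2 else if i = 2 then -2 else 0)"

lemma cases7: "(i::nat) < 7 \<Longrightarrow> P 0 \<Longrightarrow> P 1 \<Longrightarrow> P 2 \<Longrightarrow> P 3 \<Longrightarrow> P 4 \<Longrightarrow> P 5 \<Longrightarrow> P 6 \<Longrightarrow> P i"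
  using less7 by auto

lemma homog_rel: "i < 7 \<Longrightarrow> homog (reldeg i) (qrels q ! i)"
  using less7[of i] by (auto simp: qrels_def Let_def reldeg_def fsub_def fneg_def fconst_def fgen_def fmul_def fsc_def)

lemma hom_rel: "i < 7 \<Longrightarrow> hom (reldeg i) (rel q i)"
  using homog_rel unfolding hom_def rel_def by blast

lemma hom_mn: "hom (wdeg u) (mn u)"
  unfolding hom_def by (rule exI[of _ "[(1,u)]"]) (simp add: mn.abs_eq)

lemma length_qrels: "length (qrels q) = 7" by (simp add: qrels_def Let_def)

lemma gen_abs: "abs_fp (fmul (fmul [(1,u)] (qrels q ! i)) [(1,v)]) = mn u * rel q i * mn v"
  by (simp add: rel_def mn.abs_eq)

lemma Dg_Iq: assumes q: "q \<noteq> 0" and R: "\<And>i. i < 7 \<Longrightarrow> Dg dg q (rel q i) \<in> Iq q"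
  and x: "x \<in> Iq q" shows "Dg dg q x \<in> Iq q"
proof -
  obtain r where r: "r \<in> qideal q" "x = abs_fp r" using x unfolding Iq_def by auto
  have "Dg dg q (abs_fp r) \<in> Iq q" using r(1)
  proof (induction rule: qideal.induct)
    case qideal_nil then show ?case by simp
  next
    case (qideal_gen i u v)
    then have i: "i < 7" by (simp add: length_qrels)
    have ri: "rel q i \<in> Iq q" using rel_Iq[OF i] .
    have h1: "Dg dg q (mn u) * rel q i \<in> Iq q" by (rule Iq_lmul[OF ri])
    have h2: "mn u * Dg dg q (rel q i) \<in> Iq q" by (rule Iq_lmul[OF R[OF i]])
    have h3: "mn u * rel q i * Dg dg q (mn v) \<in> Iq q" by (rule Iq_rmul[OF Iq_lmul[OF ri]])
    show ?case unfolding gen_abs Dg_leibniz[OF q hom_mn] Dg_leibniz[OF q hom_rel[OF i]]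
      by (intro Iq_add Iq_sc Iq_rmul h1 h2 h3)
  next
    case (qideal_add p p') then show ?case by (simp add: Iq_add)
  next
    case (qideal_sc p k) then show ?case by (simp add: Iq_sc)
  qed
  then show ?thesis using r by simp
qed

lemma St_Iq: assumes q: "q \<noteq> 0" and x: "x \<in> Iq q" shows "St q x \<in> Iq q"
proof -
  have R: "St q (rel q i) \<in> Iq q" if "i < 7" for i
    apply (rule cases7[OF that])
    by (simp_all only: St_rel0[OF q] St_rel1[OF q] St_rel2[OF q] St_rel3[OF q] St_rel4[OF q] St_rel5[OF q] St_rel6[OF q]) (auto intro!: Iq_sc rel_Iq)
  obtain r where r: "r \<in> qideal q" "x = abs_fp r" using x unfolding Iq_def by auto
  have "St q (abs_fp r) \<in> Iq q" using r(1)
  proof (induction rule: qideal.induct)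
    case qideal_nil then show ?case by simp
  next
    case (qideal_gen i u v)
    then have i: "i < 7" by (simp add: length_qrels)
    show ?case unfolding gen_abs St_mult
      by (rule Iq_lmul[OF Iq_rmul[OF R[OF i]]])
  next
    case (qideal_add p p') then show ?case by (simp add: Iq_add)
  next
    case (qideal_sc p k) then show ?case by (simp add: Iq_sc)
  qed
  then show ?thesis using r by simp
qed

lemma Dp_Iq: assumes q: "q \<noteq> 0" and x: "x \<in> Iq q" shows "Dg (dplus_gen q) q x \<in> Iq q"
proof (rule Dg_Iq[OF q _ x])
  fix i :: nat assume "i < 7"
  then show "Dg (dplus_gen q) q (rel q i) \<in> Iq q"
    apply (rule cases7)
    by (simp_all only: Dp_rel0[OF q] Dp_rel1[OF q] Dp_rel2[OF q] Dp_rel3[OF q] Dp_rel4[OF q] Dp_rel5[OF q] Dp_rel6[OF q]) (auto intro!: Iq_sc Iq_diff Iq_uminus rel_Iq)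
qed

lemma Dm_Iq: assumes q: "q \<noteq> 0" and x: "x \<in> Iq q" shows "Dg (dminus_gen q) q x \<in> Iq q"
proof (rule Dg_Iq[OF q _ x])
  fix i :: nat assume "i < 7"
  then show "Dg (dminus_gen q) q (rel q i) \<in> Iq q"
    apply (rule cases7)
    by (simp_all only: Dm_rel0[OF q] Dm_rel1[OF q] Dm_rel2[OF q] Dm_rel3[OF q] Dm_rel4[OF q] Dm_rel5[OF q] Dm_rel6[OF q]) (auto intro!: Iq_sc Iq_diff Iq_uminus rel_Iq)
qed



lemma homog_fsc[simp]: "homog n (fsc k p) \<longleftrightarrow> homog n p"
  by (induction p) auto
lemma homog_map_prefix: "homog n p \<Longrightarrow> homog (wdeg u + n) (map (\<lambda>(c',u'). (c*c', u@u')) p)"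
  by (induction p) auto
lemma homog_fmul: "homog m p \<Longrightarrow> homog n p' \<Longrightarrow> homog (m+n) (fmul p p')"
proof (induction p)
  case Nil then show ?case by simp
next
  case (Cons a p) obtain c u where a: "a = (c,u)" by force
  then show ?case using Cons homog_map_prefix[of n p' u c] by (simp add: fmul_Cons1)
qed
lemma homog_concat: "(\<And>x. x \<in> set xs \<Longrightarrow> homog n x) \<Longrightarrow> homog n (concat xs)"
  by (induction xs) auto

lemma homog_wder: assumes "\<And>g. homog (gdeg g + dd) (dg g)"
  shows "homog (wdeg u + dd) (wder dg q u)"
proof (induction u)
  case Nil then show ?case by simp
next
  case (Cons g w)
  have "homog (gdeg g + dd + wdeg w) (fmul (dg g) [(1,w)])"
    by (rule homog_fmul[OF assms]) simp
  moreover have "homog (gdeg g + (wdeg w + dd)) (fmul [(1,[g])] (wder dg q w))"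
    by (rule homog_fmul[OF _ Cons]) simp
  ultimately show ?case by (simp add: fadd_def algebra_simps)
qed

lemma homog_dgl: assumes "\<And>g. homog (gdeg g + dd) (dg g)" "homog n p"
  shows "homog (n + dd) (dgl dg q p)"
  using assms(2)
proof (induction p)
  case Nil then show ?case by (simp add: dgl_def)
next
  case (Cons a p) obtain c u where a: "a = (c,u)" by force
  then show ?case using Cons homog_wder[OF assms(1), of u q] by (simp add: dgl_def)
qed

lemma homog_dplus_gen: "homog (gdeg g + -2) (dplus_gen q g)"
  by (cases g) (auto simp: fgen_def fsc_def)
lemma homog_dminus_gen: "homog (gdeg g + 2) (dminus_gen q g)"
  by (cases g) (auto simp: fgen_def fsc_def)

lemma homog_dplus: "homog n p \<Longrightarrow> homog (n - 2) (dplus q p)"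
  using homog_dgl[OF homog_dplus_gen] by (simp add: dplus_dgl)
lemma homog_dminus: "homog n p \<Longrightarrow> homog (n + 2) (dminus q p)"
  using homog_dgl[OF homog_dminus_gen] by (simp add: dminus_dgl)

lemma homog_gstar: "homog (- gdeg g) (gstar q g)"
  by (cases g) (auto simp: fgen_def fsc_def)
lemma homog_wstar: "homog (- wdeg w) (wstar q w)"
proof (induction w)
  case Nil then show ?case by (simp add: fconst_def)
next
  case (Cons g w) then show ?case using homog_fmul[OF Cons homog_gstar[of g q]] by (simp add: algebra_simps)
qed
lemma homog_fstar: "homog n p \<Longrightarrow> homog (- n) (fstar q p)"
proof (induction p)
  case Nil then show ?case by (simp add: fstar_def)
next
  case (Cons a p) obtain c u where a: "a = (c,u)" by force
  then show ?case using Cons homog_wstar[of u q] by (simp add: fstar_def)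
qed

lemma hom_abs: "homog n p \<Longrightarrow> hom n (abs_fp p)" unfolding hom_def by blast
lemma hom_mult: assumes "hom m x" "hom n y" shows "hom (m+n) (x*y)"
proof -
  obtain p p' where "homog m p" "x = abs_fp p" "homog n p'" "y = abs_fp p'" using assms hom_def by auto
  then show ?thesis unfolding hom_def by (intro exI[of _ "fmul p p'"]) (simp add: homog_fmul)
qed
lemma hom_St: assumes "hom n x" shows "hom (-n) (St q x)"
proof -
  obtain p where "homog n p" "x = abs_fp p" using assms hom_def by auto
  then show ?thesis unfolding hom_def by (intro exI[of _ "fstar q p"]) (simp add: homog_fstar St.abs_eq)
qed
lemma hom_gen: "hom (gdeg g) (mn [g])" using hom_mn[of "[g]"] by simp

abbreviation "Dp q \<equiv> Dg (dplus_gen q) q"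
abbreviation "Dm q \<equiv> Dg (dminus_gen q) q"

lemma Dg_gen: "Dg dg q (mn [g]) = abs_fp (dg g)"
  using Dg_mono_Cons[of dg q g "[]"] by simp

lemma St_Dm_gen: assumes q: "q \<noteq> 0"
  shows "St q (abs_fp (dminus_gen q g)) = - sc (of_real (q powi (gdeg g + 1))) (Dp q (St q (mn [g])))"
  using q by (cases g) (simp_all add: St_gen Dg_gen sc_neg)

lemma St_Dm_word: assumes q: "q \<noteq> 0"
  shows "St q (Dm q (mn w)) = - sc (of_real (q powi (wdeg w + 1))) (Dp q (St q (mn w)))"
proof (induction w)
  case Nil then show ?case by simp
next
  case (Cons g w)
  have hS: "hom (- gdeg g) (St q (mn [g]))" using hom_St[OF hom_gen] .
  have "St q (Dm q (mn (g#w))) = sc (of_real (q powi wdeg w)) (St q (mn w) * St q (abs_fp (dminus_gen q g))) + St q (Dm q (mn w)) * St q (mn [g])"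
    by (simp add: Dg_mono_Cons St_mult)
  also have "\<dots> = - sc (of_real (q powi (wdeg (g#w) + 1))) (Dp q (St q (mn w) * St q (mn [g])))"
    unfolding Cons St_Dm_gen[OF q] Dg_leibniz[OF q hS]
    using q by (simp add: algebra_simps power_int_add power_int_minus field_simps)
  also have "St q (mn w) * St q (mn [g]) = St q (mn (g#w))"
    by (metis St_mult mn_Cons)
  finally show ?case .
qed

lemma St_Dm: assumes q: "q \<noteq> 0" and h: "hom n x"
  shows "St q (Dm q x) = - sc (of_real (q powi (n + 1))) (Dp q (St q x))"
proof -
  obtain p where p: "homog n p" "x = abs_fp p" using h hom_def by auto
  show ?thesis unfolding p(2) using p(1)
    by (induction p) (auto simp: abs_fp_Cons' St_Dm_word[OF q] algebra_simps)
qed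

definition mq :: "real \<Rightarrow> fp \<Rightarrow> fp \<Rightarrow> bool" where "mq q x y \<longleftrightarrow> x - y \<in> Iq q"

lemma mq_refl[simp]: "mq q x x" by (simp add: mq_def)
lemma mq_eq: "x = y \<Longrightarrow> mq q x y" by simp
lemma mq_sym: "mq q x y \<Longrightarrow> mq q y x" unfolding mq_def by (metis Iq_uminus minus_diff_eq)
lemma mq_trans: "mq q x y \<Longrightarrow> mq q y z \<Longrightarrow> mq q x z"
  unfolding mq_def by (metis Iq_add diff_add_cancel add_diff_eq)
lemma mq_add: "mq q x y \<Longrightarrow> mq q x' y' \<Longrightarrow> mq q (x + x') (y + y')"
  unfolding mq_def using Iq_add by (metis add_diff_add)
lemma mq_diff: "mq q x y \<Longrightarrow> mq q x' y' \<Longrightarrow> mq q (x - x') (y - y')"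
proof -
  assume "mq q x y" "mq q x' y'"
  moreover have "(x - x') - (y - y') = (x - y) - (x' - y')" by (simp add: algebra_simps)
  ultimately show ?thesis unfolding mq_def by (metis Iq_diff)
qed
lemma mq_uminus: "mq q x y \<Longrightarrow> mq q (- x) (- y)"
  unfolding mq_def by (metis Iq_uminus minus_diff_eq minus_diff_minus)
lemma mq_sc: "mq q x y \<Longrightarrow> mq q (sc k x) (sc k y)"
  unfolding mq_def by (metis Iq_sc sc_diff)
lemma mq_lmul: "mq q x y \<Longrightarrow> mq q (z * x) (z * y)"
  unfolding mq_def by (metis Iq_lmul right_diff_distrib)
lemma mq_rmul: "mq q x y \<Longrightarrow> mq q (x * z) (y * z)"
  unfolding mq_def by (metis Iq_rmul left_diff_distrib)
lemma mq_mult: "mq q x y \<Longrightarrow> mq q x' y' \<Longrightarrow> mq q (x * x') (y * y')"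
  by (meson mq_lmul mq_rmul mq_trans)
lemma mq_Dp: "q \<noteq> 0 \<Longrightarrow> mq q x y \<Longrightarrow> mq q (Dp q x) (Dp q y)"
  unfolding mq_def by (metis Dp_Iq Dg_diff)
lemma mq_Dm: "q \<noteq> 0 \<Longrightarrow> mq q x y \<Longrightarrow> mq q (Dm q x) (Dm q y)"
  unfolding mq_def by (metis Dm_Iq Dg_diff)
lemma mq_St: "q \<noteq> 0 \<Longrightarrow> mq q x y \<Longrightarrow> mq q (St q x) (St q y)"
  unfolding mq_def by (metis St_Iq St_diff)
lemma mq_Iq: "mq q x 0 \<longleftrightarrow> x \<in> Iq q" by (simp add: mq_def)

lemma fzero_iff: "fzero q p \<longleftrightarrow> abs_fp p \<in> Iq q"
  unfolding fzero_def Iq_def by (auto simp: abs_fp_eq_iff[symmetric] image_iff)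
lemma feq_iff: "feq q p p' \<longleftrightarrow> mq q (abs_fp p) (abs_fp p')"
  by (simp add: feq_def fzero_iff mq_def)
lemma peq_iff: "peq q m m' \<longleftrightarrow> mq q (abs_fp (fst m)) (abs_fp (fst m')) \<and> mq q (abs_fp (snd m)) (abs_fp (snd m'))"
  by (simp add: peq_def pzero_def psub_def padd_def pneg_def psc_def fzero_iff mq_def fadd_def sc_neg)

lemma tcoef_Nil[simp]: "tcoef [] k = 0" by (simp add: tcoef_def)
definition dlt :: "pr \<times> pr \<Rightarrow> pr \<times> pr \<Rightarrow> complex" where "dlt x k = (if x = k then 1 else 0)"
lemma tcoef_Cons[simp]: "tcoef ((c,x)#t) k = c * dlt x k + tcoef t k" by (simp add: tcoef_def dlt_def)
lemma tcoef_append[simp]: "tcoef (t@t') k = tcoef t k + tcoef t' k" by (simp add: tcoef_def)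
lemma tsc_Nil[simp]: "tsc k [] = []" by (simp add: tsc_def)
lemma tsc_Cons[simp]: "tsc k ((c,x)#t) = (k*c,x) # tsc k t" by (simp add: tsc_def)
lemma tsc_append[simp]: "tsc k (t@t') = tsc k t @ tsc k t'" by (simp add: tsc_def)
lemma tcoef_tsc[simp]: "tcoef (tsc k t) x = k * tcoef t x"
  by (induction t) (auto simp: algebra_simps)
lemma tcoef_tsub: "tcoef (tsub t t') x = tcoef t x - tcoef t' x" by (simp add: tsub_def)

definition NV :: "real \<Rightarrow> (pr \<Rightarrow> bool) \<Rightarrow> (pr \<Rightarrow> bool) \<Rightarrow> (pr \<times> pr \<Rightarrow> complex) \<Rightarrow> bool" where
  "NV q M N f \<longleftrightarrow> (\<exists>r \<in> tnull q M N. f = tcoef r)"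

lemma teq_NV: "teq q M N t t' \<longleftrightarrow> NV q M N (\<lambda>x. tcoef t x - tcoef t' x)"
  by (simp add: teq_def NV_def tcoef_tsub[abs_def])

lemma NV_0: "NV q M N (\<lambda>x. 0)"
  unfolding NV_def by (rule bexI[of _ "[]"]) (auto intro: tn_nil)
lemma NV_add: "NV q M N f \<Longrightarrow> NV q M N g \<Longrightarrow> NV q M N (\<lambda>x. f x + g x)"
  unfolding NV_def by (auto intro!: bexI[of _ "_ @ _"] tn_add)
lemma NV_sc: "NV q M N f \<Longrightarrow> NV q M N (\<lambda>x. k * f x)"
  unfolding NV_def by (auto intro!: bexI[of _ "tsc _ _"] tn_sc)
lemma NV_cong: "NV q M N f \<Longrightarrow> (\<And>x. f x = g x) \<Longrightarrow> NV q M N g"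
  by (metis ext)
lemma NV_tnull: "r \<in> tnull q M N \<Longrightarrow> NV q M N (tcoef r)"
  unfolding NV_def by auto

lemma teq_refl[simp]: "teq q M N t t"
  unfolding teq_NV by (simp add: NV_0)
lemma teq_tcoef: "tcoef t = tcoef t' \<Longrightarrow> teq q M N t t'"
  unfolding teq_NV by (simp add: NV_0)
lemma teq_sym: "teq q M N t t' \<Longrightarrow> teq q M N t' t"
  unfolding teq_NV by (drule NV_sc[where k="-1"]) (erule NV_cong, simp)
lemma teq_trans: "teq q M N t t' \<Longrightarrow> teq q M N t' t'' \<Longrightarrow> teq q M N t t''"
  unfolding teq_NV by (drule (1) NV_add) (erule NV_cong, simp)
lemmas teq_trans_calc[trans] = teq_trans
lemma teq_app: "teq q M N t1 t1' \<Longrightarrow> teq q M N t2 t2' \<Longrightarrow> teq q M N (t1@t2) (t1'@t2')"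
  unfolding teq_NV by (drule (1) NV_add) (erule NV_cong, simp)
lemma teq_Cons: "teq q M N [x] t1' \<Longrightarrow> teq q M N t2 t2' \<Longrightarrow> teq q M N (x#t2) (t1'@t2')"
  using teq_app[of q M N "[x]" t1' t2 t2'] by simp
lemma teq_tsc: "teq q M N t t' \<Longrightarrow> teq q M N (tsc k t) (tsc k t')"
  unfolding teq_NV by (drule NV_sc[where k=k]) (erule NV_cong, simp add: algebra_simps)
lemma teq_tcoef_trans: "teq q M N t t' \<Longrightarrow> tcoef t' = tcoef t'' \<Longrightarrow> teq q M N t t''"
  using teq_tcoef teq_trans by blast
lemma teq_tcoef_trans1: "tcoef t = tcoef t' \<Longrightarrow> teq q M N t' t'' \<Longrightarrow> teq q M N t t''"
  using teq_tcoef teq_trans by blast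

lemma teq_gen: "r \<in> tnull q M N \<Longrightarrow> (\<And>x. tcoef t x - tcoef t' x = c * tcoef r x) \<Longrightarrow> teq q M N t t'"
  unfolding teq_NV by (rule NV_cong[OF NV_sc[OF NV_tnull], of r q M N c]) auto

lemma G_addL: "M m1 \<Longrightarrow> M m2 \<Longrightarrow> N n \<Longrightarrow> teq q M N [(c, padd m1 m2, n)] [(c,m1,n),(c,m2,n)]"
  by (rule teq_gen[OF tn_addL, where c=c]) (auto simp: algebra_simps)
lemma G_addR: "M m \<Longrightarrow> N n1 \<Longrightarrow> N n2 \<Longrightarrow> teq q M N [(c, m, padd n1 n2)] [(c,m,n1),(c,m,n2)]"
  by (rule teq_gen[OF tn_addR, where c=c]) (auto simp: algebra_simps)
lemma G_scL: "M m \<Longrightarrow> N n \<Longrightarrow> teq q M N [(c, psc k m, n)] [(c*k,m,n)]"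
  by (rule teq_gen[OF tn_scL, where c=c]) (auto simp: algebra_simps)
lemma G_scR: "M m \<Longrightarrow> N n \<Longrightarrow> teq q M N [(c, m, psc k n)] [(c*k,m,n)]"
  by (rule teq_gen[OF tn_scR, where c=c]) (auto simp: algebra_simps)
lemma G_bal: "homog 0 b \<Longrightarrow> M m \<Longrightarrow> N n \<Longrightarrow> teq q M N [(c, prmul m b, n)] [(c, m, plmul b n)]"
  by (rule teq_gen[OF tn_bal, where c=c]) (auto simp: algebra_simps)
lemma G_repL: "M m \<Longrightarrow> M m' \<Longrightarrow> peq q m m' \<Longrightarrow> N n \<Longrightarrow> teq q M N [(c, m, n)] [(c, m', n)]"
  by (rule teq_gen[OF tn_repL, where c=c]) (auto simp: algebra_simps)
lemma G_repR: "M m \<Longrightarrow> N n \<Longrightarrow> N n' \<Longrightarrow> peq q n n' \<Longrightarrow> teq q M N [(c, m, n)] [(c, m, n')]"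
  by (rule teq_gen[OF tn_repR, where c=c]) (auto simp: algebra_simps)
lemma teq_zero: "teq q M N [(0, x)] []"
  by (rule teq_tcoef) (simp add: fun_eq_iff)

lemma wfS_iff: "wfS (x,y) \<longleftrightarrow> homog (-1) x \<and> homog 1 y" by (simp add: wfS_def)
lemma wfOm_iff: "wfOm (x,y) \<longleftrightarrow> homog (-2) x \<and> homog 2 y" by (simp add: wfOm_def)
lemma homog_gen[simp]: "homog n (fgen g) \<longleftrightarrow> gdeg g = n" by (simp add: fgen_def)
lemma wfS_psc: "wfS m \<Longrightarrow> wfS (psc k m)" by (simp add: wfS_def psc_def)
lemma wfOm_psc: "wfOm m \<Longrightarrow> wfOm (psc k m)" by (simp add: wfOm_def psc_def)
lemma wfS_padd: "wfS m \<Longrightarrow> wfS m' \<Longrightarrow> wfS (padd m m')" by (simp add: wfS_def padd_def fadd_def)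
lemma wfOm_padd: "wfOm m \<Longrightarrow> wfOm m' \<Longrightarrow> wfOm (padd m m')" by (simp add: wfOm_def padd_def fadd_def)
lemma wfS_plmul: "homog 0 b \<Longrightarrow> wfS m \<Longrightarrow> wfS (plmul b m)"
  using homog_fmul[of 0 b] by (simp add: wfS_def plmul_def)
lemma wfOm_plmul: "homog 0 b \<Longrightarrow> wfOm m \<Longrightarrow> wfOm (plmul b m)"
  using homog_fmul[of 0 b] by (simp add: wfOm_def plmul_def)
lemma wfS_prmul: "homog 0 b \<Longrightarrow> wfS m \<Longrightarrow> wfS (prmul m b)"
  using homog_fmul[of _ _ 0 b] by (simp add: wfS_def prmul_def)
lemma wfOm_prmul: "homog 0 b \<Longrightarrow> wfOm m \<Longrightarrow> wfOm (prmul m b)"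
  using homog_fmul[of _ _ 0 b] by (simp add: wfOm_def prmul_def)
lemma wfS_basis: "wfS (gd,[])" "wfS (gb,[])" "wfS ([],ga)" "wfS ([],gc)"
  by (simp_all add: wfS_def)

section \<open>Normal form for Omega \<otimes> S\<close>

abbreviation "TE q \<equiv> teq q wfOm wfS"

lemmas TE_addL = G_addL[where M=wfOm and N=wfS]
lemmas TE_addR = G_addR[where M=wfOm and N=wfS]
lemmas TE_scL = G_scL[where M=wfOm and N=wfS]
lemmas TE_scR = G_scR[where M=wfOm and N=wfS]
lemmas TE_bal = G_bal[where M=wfOm and N=wfS]
lemmas TE_repL = G_repL[where M=wfOm and N=wfS]
lemmas TE_repR = G_repR[where M=wfOm and N=wfS]

definition phi :: "complex \<Rightarrow> (pr \<Rightarrow> fa) \<Rightarrow> fa \<Rightarrow> ten \<Rightarrow> pr" where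
  "phi \<kappa> sel g t = (concat (map (\<lambda>(c,\<omega>,z). fsc (\<kappa>*c) (fmul (fst \<omega>) (fmul (sel z) g))) t),
                     concat (map (\<lambda>(c,\<omega>,z). fsc (\<kappa>*c) (fmul (snd \<omega>) (fmul (sel z) g))) t))"

definition NF :: "real \<Rightarrow> ten \<Rightarrow> ten" where
  "NF q t = [(1, phi 1 fst ga t, (gd,[])), (1, phi (- inverse (of_real q)) fst gc t, (gb,[])),
             (1, phi 1 snd gd t, ([],ga)), (1, phi (- of_real q) snd gb t, ([],gc))]"

lemma phi_Nil[simp]: "phi \<kappa> sel g [] = ([],[])" by (simp add: phi_def)
lemma phi_Cons: "phi \<kappa> sel g (x#t) = padd (phi \<kappa> sel g [x]) (phi \<kappa> sel g t)"
  by (simp add: phi_def padd_def fadd_def split_def)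
lemma phi_append: "phi \<kappa> sel g (t@t') = padd (phi \<kappa> sel g t) (phi \<kappa> sel g t')"
  by (simp add: phi_def padd_def fadd_def split_def)

lemma wfOm_phi: "(\<And>c \<omega> z. (c,\<omega>,z) \<in> set t \<Longrightarrow> wfOm \<omega> \<and> homog 0 (fmul (sel z) g)) \<Longrightarrow> wfOm (phi \<kappa> sel g t)"
proof (induction t)
  case Nil then show ?case by (simp add: wfOm_def)
next
  case (Cons x t) obtain c \<omega> z where x: "x = (c,\<omega>,z)" by (cases x) auto
  have "wfOm \<omega> \<and> homog 0 (fmul (sel z) g)" using Cons.prems[of c \<omega> z] x by simp
  then have "wfOm (phi \<kappa> sel g [x])" using homog_fmul[of "-2" "fst \<omega>" 0] homog_fmul[of "2" "snd \<omega>" 0]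
    by (simp add: x phi_def wfOm_def)
  moreover have "wfOm (phi \<kappa> sel g t)" using Cons.IH Cons.prems by (metis list.set_intros(2))
  ultimately show ?case by (subst phi_Cons) (auto intro!: wfOm_padd)
qed

lemma twf_Cons[simp]: "twf M N ((c,m,n)#t) \<longleftrightarrow> M m \<and> N n \<and> twf M N t" by (simp add: twf_def)
lemma twf_Nil[simp]: "twf M N []" by (simp add: twf_def)
lemma twf_append[simp]: "twf M N (t@t') \<longleftrightarrow> twf M N t \<and> twf M N t'"
  unfolding twf_def by (simp only: set_append ball_Un)

lemma wfS_homog: assumes "wfS z"
  shows "homog 0 (fmul (fst z) ga)" "homog 0 (fmul (fst z) gc)" "homog 0 (fmul (snd z) gd)" "homog 0 (fmul (snd z) gb)"
  using assms homog_fmul[of "-1" "fst z" 1] homog_fmul[of "1" "snd z" "-1"] by (auto simp: wfS_def)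

lemma wfOm_NF: "twf wfOm wfS t \<Longrightarrow> twf wfOm wfS (NF q t)"
  unfolding NF_def by (auto simp: wfS_basis twf_def intro!: wfOm_phi dest: wfS_homog)

lemma u1_eq: "gA*gD - sc (inverse (of_real q)) (gC*gB) - 1 = rel q 6 + sc (inverse (of_real q)) (rel q 4)"
  apply (simp only: to_list rel_def)
  apply (rule iffD2[OF abs_fp_eq_iff])
  apply (simp add: fun_eq_iff coef_Cons_dl fmul_def qrels_def Let_def
     fsub_def fneg_def fconst_def fgen_def fadd_def)
  apply ((simp add: field_simps)?)
  done
lemma u2_eq: "gD*gA - sc (of_real q) (gB*gC) - 1 = rel q 5 + rel q 6"
  apply (simp only: to_list rel_def)
  apply (rule iffD2[OF abs_fp_eq_iff])
  apply (simp add: fun_eq_iff coef_Cons_dl fmul_def qrels_def Let_def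
     fsub_def fneg_def fconst_def fgen_def fadd_def)
  apply ((simp add: field_simps)?)
  done
lemma u1_Iq: "gA*gD - sc (inverse (of_real q)) (gC*gB) - 1 \<in> Iq q"
  unfolding u1_eq by (intro Iq_add Iq_sc rel_Iq) auto
lemma u2_Iq: "gD*gA - sc (of_real q) (gB*gC) - 1 \<in> Iq q"
  unfolding u2_eq by (intro Iq_add Iq_sc rel_Iq) auto
lemma mq_u1: "mq q (x * (gA*gD - sc (inverse (of_real q)) (gC*gB)) * y) (x * y)"
proof -
  have "x * (gA*gD - sc (inverse (of_real q)) (gC*gB)) * y - x * y = x * (gA*gD - sc (inverse (of_real q)) (gC*gB) - 1) * y"
    by (simp add: algebra_simps)
  then show ?thesis unfolding mq_def by (metis Iq_lmul Iq_rmul u1_Iq)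
qed
lemma mq_u2: "mq q (x * (gD*gA - sc (of_real q) (gB*gC)) * y) (x * y)"
proof -
  have "x * (gD*gA - sc (of_real q) (gB*gC)) * y - x * y = x * (gD*gA - sc (of_real q) (gB*gC) - 1) * y"
    by (simp add: algebra_simps)
  then show ?thesis unfolding mq_def by (metis Iq_lmul Iq_rmul u2_Iq)
qed

lemma piece: assumes "wfOm \<omega>" "homog 0 u" "wfS P"
  shows "TE q [(c, \<omega>, psc k (plmul u P))] [(1, psc (c*k) (prmul \<omega> u), P)]"
proof -
  have wP: "wfS (plmul u P)" using assms wfS_plmul by auto
  have "TE q [(c, \<omega>, psc k (plmul u P))] [(c*k, \<omega>, plmul u P)]" by (rule G_scR[where M=wfOm and N=wfS, OF assms(1) wP])
  also have "TE q \<dots> [(c*k, prmul \<omega> u, P)]" by (rule teq_sym[OF G_bal[where M=wfOm and N=wfS, OF assms(2) assms(1) assms(3)]])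
  also have "TE q \<dots> [(1, psc (c*k) (prmul \<omega> u), P)]"
    using teq_sym[OF G_scL[of wfOm "prmul \<omega> u" wfS P q 1 "c*k"]] assms wfOm_prmul by simp
  finally show ?thesis .
qed

lemma abs_pair_simps:
  "fst (psc k m) = fsc k (fst m)" "snd (psc k m) = fsc k (snd m)"
  "fst (padd m m') = fadd (fst m) (fst m')" "snd (padd m m') = fadd (snd m) (snd m')"
  "fst (plmul b m) = fmul b (fst m)" "snd (plmul b m) = fmul b (snd m)"
  "fst (prmul m b) = fmul (fst m) b" "snd (prmul m b) = fmul (snd m) b"
  by (simp_all add: psc_def padd_def plmul_def prmul_def)

lemma norm1: assumes w: "wfOm \<omega>" "wfS z"
  shows "TE q [(c, \<omega>, z)] (NF q [(c, \<omega>, z)])"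
proof -
  define Q where "Q = complex_of_real q"
  define u1 where "u1 = fmul (fst z) ga"
  define u2 where "u2 = fmul (fst z) gc"
  define u3 where "u3 = fmul (snd z) gd"
  define u4 where "u4 = fmul (snd z) gb"
  have hu: "homog 0 u1" "homog 0 u2" "homog 0 u3" "homog 0 u4"
    using wfS_homog[OF w(2)] by (simp_all add: u1_def u2_def u3_def u4_def)
  define y1 where "y1 = psc 1 (plmul u1 (gd,[]))"
  define y2 where "y2 = psc (- inverse Q) (plmul u2 (gb,[]))"
  define y3 where "y3 = psc 1 (plmul u3 ([],ga))"
  define y4 where "y4 = psc (- Q) (plmul u4 ([],gc))"
  have wy: "wfS y1" "wfS y2" "wfS y3" "wfS y4"
    unfolding y1_def y2_def y3_def y4_def using hu
    by (auto intro!: wfS_psc wfS_plmul simp: wfS_basis)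
  have wy': "wfS (padd y3 y4)" "wfS (padd y2 (padd y3 y4))" "wfS (padd y1 (padd y2 (padd y3 y4)))"
    using wy by (auto intro!: wfS_padd)
  have pz: "peq q z (padd y1 (padd y2 (padd y3 y4)))"
  proof -
    have e1: "abs_fp (fst (padd y1 (padd y2 (padd y3 y4)))) = abs_fp (fst z) * (gA*gD - sc (inverse (of_real q)) (gC*gB)) * 1"
      by (simp add: y1_def y2_def y3_def y4_def u1_def u2_def abs_pair_simps Q_def algebra_simps sc_neg)
    have e2: "abs_fp (snd (padd y1 (padd y2 (padd y3 y4)))) = abs_fp (snd z) * (gD*gA - sc (of_real q) (gB*gC)) * 1"
      by (simp add: y1_def y2_def y3_def y4_def u3_def u4_def abs_pair_simps Q_def algebra_simps sc_neg)
    show ?thesis unfolding peq_iff e1 e2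
      using mq_sym[OF mq_u1[of q "abs_fp (fst z)" 1]] mq_sym[OF mq_u2[of q "abs_fp (snd z)" 1]] by simp
  qed
  have "TE q [(c, \<omega>, z)] [(c, \<omega>, padd y1 (padd y2 (padd y3 y4)))]"
    by (rule TE_repR[OF w wy'(3) pz])
  also have "TE q \<dots> ([(c, \<omega>, y1)] @ [(c, \<omega>, y2)] @ [(c, \<omega>, y3)] @ [(c, \<omega>, y4)])"
  proof -
    have 1: "TE q [(c, \<omega>, padd y3 y4)] ([(c, \<omega>, y3)] @ [(c, \<omega>, y4)])"
      using TE_addR[OF w(1) wy(3) wy(4)] by simp
    have 2: "TE q [(c, \<omega>, padd y2 (padd y3 y4))] ([(c, \<omega>, y2)] @ [(c, \<omega>, y3)] @ [(c, \<omega>, y4)])"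
      using teq_trans[OF TE_addR[OF w(1) wy(2) wy'(1)] teq_Cons[OF teq_refl 1]] by simp
    show ?thesis
      using teq_trans[OF TE_addR[OF w(1) wy(1) wy'(2)] teq_Cons[OF teq_refl 2]] by simp
  qed
  also have "TE q \<dots> ([(1, psc (c*1) (prmul \<omega> u1), (gd,[]))] @ [(1, psc (c*(- inverse Q)) (prmul \<omega> u2), (gb,[]))]
     @ [(1, psc (c*1) (prmul \<omega> u3), ([],ga))] @ [(1, psc (c*(-Q)) (prmul \<omega> u4), ([],gc))])"
    unfolding y1_def y2_def y3_def y4_def
    by (intro teq_app piece w(1) hu wfS_basis)
  also have "TE q \<dots> (NF q [(c, \<omega>, z)])"
    by (rule teq_tcoef) (simp add: NF_def phi_def psc_def prmul_def Q_def u1_def u2_def u3_def u4_def mult.commute)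
  finally show ?thesis .
qed

lemma TE_null: "wfS P \<Longrightarrow> TE q [(1, ([],[]), P)] []"
proof -
  assume P: "wfS P"
  have w: "wfOm ([],[])" by (simp add: wfOm_def)
  have "TE q [(1, psc 0 ([],[]), P)] [(1*0, ([],[]), P)]" by (rule TE_scL[OF w P])
  then have "TE q [(1, ([],[]), P)] [(0, ([],[]), P)]" by (simp add: psc_def)
  then show ?thesis using teq_zero teq_trans by blast
qed

lemma NF_thm: "twf wfOm wfS t \<Longrightarrow> TE q t (NF q t)"
proof (induction t)
  case Nil
  have "TE q ([(1, ([],[]), (gd,[]))] @ [(1, ([],[]), (gb,[]))] @ [(1, ([],[]), ([],ga))] @ [(1, ([],[]), ([],gc))]) ([] @ [] @ [] @ [])"
    by (intro teq_app TE_null wfS_basis)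
  then show ?case by (simp add: NF_def teq_sym)
next
  case (Cons x t)
  obtain c \<omega> z where x: "x = (c,\<omega>,z)" by (cases x) auto
  have w: "wfOm \<omega>" "wfS z" "twf wfOm wfS t" using Cons.prems x by auto
  have 1: "TE q (x#t) (NF q [x] @ NF q t)" unfolding x by (rule teq_Cons[OF norm1[OF w(1,2)] Cons.IH[OF w(3)]])
  have wa: "twf wfOm wfS (NF q [x])" "twf wfOm wfS (NF q t)"
    using wfOm_NF[of "[x]" q] wfOm_NF[OF w(3)] w x by auto
  let ?a1 = "phi 1 fst ga [x]" and ?a2 = "phi (- inverse (of_real q)) fst gc [x]"
    and ?a3 = "phi 1 snd gd [x]" and ?a4 = "phi (- of_real q) snd gb [x]"
  let ?b1 = "phi 1 fst ga t" and ?b2 = "phi (- inverse (of_real q)) fst gc t"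
    and ?b3 = "phi 1 snd gd t" and ?b4 = "phi (- of_real q) snd gb t"
  have wab: "wfOm ?a1" "wfOm ?a2" "wfOm ?a3" "wfOm ?a4" "wfOm ?b1" "wfOm ?b2" "wfOm ?b3" "wfOm ?b4"
    using wa by (simp_all add: NF_def)
  have 2: "TE q (NF q [x] @ NF q t)
     ([(1, ?a1, (gd,[])), (1, ?b1, (gd,[]))] @ [(1, ?a2, (gb,[])), (1, ?b2, (gb,[]))] @
      [(1, ?a3, ([],ga)), (1, ?b3, ([],ga))] @ [(1, ?a4, ([],gc)), (1, ?b4, ([],gc))])"
    by (rule teq_tcoef) (simp add: NF_def fun_eq_iff algebra_simps)
  have 3: "TE q ([(1, ?a1, (gd,[])), (1, ?b1, (gd,[]))] @ [(1, ?a2, (gb,[])), (1, ?b2, (gb,[]))] @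
      [(1, ?a3, ([],ga)), (1, ?b3, ([],ga))] @ [(1, ?a4, ([],gc)), (1, ?b4, ([],gc))])
     ([(1, padd ?a1 ?b1, (gd,[]))] @ [(1, padd ?a2 ?b2, (gb,[]))] @ [(1, padd ?a3 ?b3, ([],ga))] @ [(1, padd ?a4 ?b4, ([],gc))])"
    by (intro teq_app teq_sym[OF TE_addL] wab wfS_basis)
  have 4: "[(1, padd ?a1 ?b1, (gd,[]))] @ [(1, padd ?a2 ?b2, (gb,[]))] @ [(1, padd ?a3 ?b3, ([],ga))] @ [(1, padd ?a4 ?b4, ([],gc))] = NF q (x#t)"
    by (simp add: NF_def phi_Cons[of _ _ _ x t])
  show ?case using teq_trans[OF 1 teq_trans[OF 2 3]] 4 by simp
qed

lemma TE_phi: assumes "twf wfOm wfS t" "twf wfOm wfS t'"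
  and "peq q (phi 1 fst ga t) (phi 1 fst ga t')"
  and "peq q (phi (- inverse (of_real q)) fst gc t) (phi (- inverse (of_real q)) fst gc t')"
  and "peq q (phi 1 snd gd t) (phi 1 snd gd t')"
  and "peq q (phi (- of_real q) snd gb t) (phi (- of_real q) snd gb t')"
  shows "TE q t t'"
proof -
  have wa: "twf wfOm wfS (NF q t)" "twf wfOm wfS (NF q t')" using wfOm_NF assms(1,2) by auto
  have w: "wfOm (phi 1 fst ga t)" "wfOm (phi (- inverse (of_real q)) fst gc t)"
     "wfOm (phi 1 snd gd t)" "wfOm (phi (- of_real q) snd gb t)"
     "wfOm (phi 1 fst ga t')" "wfOm (phi (- inverse (of_real q)) fst gc t')"
     "wfOm (phi 1 snd gd t')" "wfOm (phi (- of_real q) snd gb t')"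
    using wa by (simp_all add: NF_def)
  have "TE q ([(1, phi 1 fst ga t, (gd,[]))] @ [(1, phi (- inverse (of_real q)) fst gc t, (gb,[]))]
     @ [(1, phi 1 snd gd t, ([],ga))] @ [(1, phi (- of_real q) snd gb t, ([],gc))])
   ([(1, phi 1 fst ga t', (gd,[]))] @ [(1, phi (- inverse (of_real q)) fst gc t', (gb,[]))]
     @ [(1, phi 1 snd gd t', ([],ga))] @ [(1, phi (- of_real q) snd gb t', ([],gc))])"
    by (intro teq_app TE_repL assms(3-6) wfS_basis w)
  then have "TE q (NF q t) (NF q t')" by (simp add: NF_def)
  then show ?thesis using teq_trans[OF NF_thm[OF assms(1)] teq_trans[OF _ teq_sym[OF NF_thm[OF assms(2)]]]] by blast
qed




definition shp :: "real \<Rightarrow> pr \<Rightarrow> pr \<Rightarrow> ten" where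
  "shp q a b = [(1, prmul a ga, (gd,[])), (- inverse (of_real q), prmul a gc, (gb,[])),
                (1, prmul b gd, ([],ga)), (- of_real q, prmul b gb, ([],gc))]"

lemma prmul_psc: "prmul (psc k m) z = psc k (prmul m z)" by (simp add: prmul_def psc_def fmul_fsc1)
lemma plmul_psc: "plmul b (psc k m) = psc k (plmul b m)" by (simp add: plmul_def psc_def fmul_fsc2)

lemma nablaS_shp: "nablaS q s = shp q (psc (of_real q) (pd q (fst s))) (psc (inverse (of_real q)) (pd q (snd s)))"
  by (simp add: nablaS_def shp_def hmul_def prmul_psc Let_def)
lemma sigmaS1_shp: "sigmaS1 q s w = shp q (psc (of_real q) (plmul (fst s) w)) (psc (inverse (of_real q)) (plmul (snd s) w))"
  by (simp add: sigmaS1_def shp_def hmul_def prmul_psc Let_def)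

abbreviation "PH1 q \<equiv> phi 1 fst ga"
abbreviation "PH2 q \<equiv> phi (- inverse (complex_of_real q)) fst gc"
abbreviation "PH3 q \<equiv> phi 1 snd gd"
abbreviation "PH4 q \<equiv> phi (- complex_of_real q) snd gb"

abbreviation F :: "pr \<Rightarrow> fp" where "F m \<equiv> abs_fp (fst m)"
abbreviation S :: "pr \<Rightarrow> fp" where "S m \<equiv> abs_fp (snd m)"

abbreviation "U1 q \<equiv> gA*gD - sc (inverse (complex_of_real q)) (gC*gB)"
abbreviation "U2 q \<equiv> gD*gA - sc (complex_of_real q) (gB*gC)"

lemma shp_PH:
  "F (PH1 q (shp q a b)) = F a * U1 q * gA" "S (PH1 q (shp q a b)) = S a * U1 q * gA"
  "F (PH2 q (shp q a b)) = sc (- inverse (of_real q)) (F a * U1 q * gC)"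
  "S (PH2 q (shp q a b)) = sc (- inverse (of_real q)) (S a * U1 q * gC)"
  "F (PH3 q (shp q a b)) = F b * U2 q * gD" "S (PH3 q (shp q a b)) = S b * U2 q * gD"
  "F (PH4 q (shp q a b)) = sc (- of_real q) (F b * U2 q * gB)"
  "S (PH4 q (shp q a b)) = sc (- of_real q) (S b * U2 q * gB)"
  by (simp_all add: shp_def phi_def prmul_def algebra_simps sc_neg mult.assoc)

lemma shp_PH_mq:
  "mq q (F (PH1 q (shp q a b))) (F a * gA)" "mq q (S (PH1 q (shp q a b))) (S a * gA)"
  "mq q (F (PH2 q (shp q a b))) (sc (- inverse (of_real q)) (F a * gC))"
  "mq q (S (PH2 q (shp q a b))) (sc (- inverse (of_real q)) (S a * gC))"
  "mq q (F (PH3 q (shp q a b))) (F b * gD)" "mq q (S (PH3 q (shp q a b))) (S b * gD)"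
  "mq q (F (PH4 q (shp q a b))) (sc (- of_real q) (F b * gB))"
  "mq q (S (PH4 q (shp q a b))) (sc (- of_real q) (S b * gB))"
  unfolding shp_PH by (intro mq_u1 mq_u2 mq_sc)+

lemma PH_single:
  "abs_fp (fst (phi \<kappa> sel g [(c,\<omega>,z)])) = sc (\<kappa>*c) (F \<omega> * abs_fp (sel z) * abs_fp g)"
  "abs_fp (snd (phi \<kappa> sel g [(c,\<omega>,z)])) = sc (\<kappa>*c) (S \<omega> * abs_fp (sel z) * abs_fp g)"
  by (simp_all add: phi_def mult.assoc)

lemma PH_append:
  "abs_fp (fst (phi \<kappa> sel g (t@t'))) = abs_fp (fst (phi \<kappa> sel g t)) + abs_fp (fst (phi \<kappa> sel g t'))"
  "abs_fp (snd (phi \<kappa> sel g (t@t'))) = abs_fp (snd (phi \<kappa> sel g t)) + abs_fp (snd (phi \<kappa> sel g t'))"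
  by (simp_all add: phi_append padd_def)


definition sa :: "ten \<Rightarrow> pr" where
  "sa u = (concat (map (\<lambda>(c,\<omega>,z). fsc c (fmul (fst \<omega>) (fst z))) u),
           concat (map (\<lambda>(c,\<omega>,z). fsc c (fmul (snd \<omega>) (fst z))) u))"
definition sb :: "ten \<Rightarrow> pr" where
  "sb u = (concat (map (\<lambda>(c,\<omega>,z). fsc c (fmul (fst \<omega>) (snd z))) u),
           concat (map (\<lambda>(c,\<omega>,z). fsc c (fmul (snd \<omega>) (snd z))) u))"

lemma sa_Nil[simp]: "sa [] = ([],[])" by (simp add: sa_def)
lemma sb_Nil[simp]: "sb [] = ([],[])" by (simp add: sb_def)
lemma sa_Cons: "sa (x#t) = padd (sa [x]) (sa t)" by (simp add: sa_def padd_def fadd_def split_def)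
lemma sb_Cons: "sb (x#t) = padd (sb [x]) (sb t)" by (simp add: sb_def padd_def fadd_def split_def)

lemma sa_single: "sa [(c,\<omega>,z)] = (fsc c (fmul (fst \<omega>) (fst z)), fsc c (fmul (snd \<omega>) (fst z)))"
  by (simp add: sa_def)
lemma sb_single: "sb [(c,\<omega>,z)] = (fsc c (fmul (fst \<omega>) (snd z)), fsc c (fmul (snd \<omega>) (snd z)))"
  by (simp add: sb_def)

lemma sab_abs:
  "F (sa u) = (\<Sum>(c,\<omega>,z)\<leftarrow>u. sc c (F \<omega> * F z))"
  "S (sa u) = (\<Sum>(c,\<omega>,z)\<leftarrow>u. sc c (S \<omega> * F z))"
  "F (sb u) = (\<Sum>(c,\<omega>,z)\<leftarrow>u. sc c (F \<omega> * S z))"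
  "S (sb u) = (\<Sum>(c,\<omega>,z)\<leftarrow>u. sc c (S \<omega> * S z))"
  by (induction u) (auto simp: sa_def sb_def split_def)

definition wfA :: "pr \<Rightarrow> bool" where "wfA a \<longleftrightarrow> homog (-3) (fst a) \<and> homog 1 (snd a)"
definition wfB :: "pr \<Rightarrow> bool" where "wfB b \<longleftrightarrow> homog (-1) (fst b) \<and> homog 3 (snd b)"

lemma twf_shp: "wfA a \<Longrightarrow> wfB b \<Longrightarrow> twf wfOm wfS (shp q a b)"
  unfolding shp_def wfA_def wfB_def using homog_fmul[of "-3" _ 1] homog_fmul[of 1 _ 1]
    homog_fmul[of "-1" _ "-1"] homog_fmul[of 3 _ "-1"]
  by (auto simp: wfOm_def wfS_basis prmul_def)

lemma wfA_sa: "twf wfOm wfS u \<Longrightarrow> wfA (sa u)"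
proof (induction u)
  case Nil then show ?case by (simp add: wfA_def)
next
  case (Cons x t) obtain c \<omega> z where x: "x = (c,\<omega>,z)" by (cases x) auto
  then have "wfOm \<omega>" "wfS z" "twf wfOm wfS t" using Cons.prems by auto
  moreover have "wfA (sa t)" using Cons.IH \<open>twf wfOm wfS t\<close> by simp
  ultimately show ?case using homog_fmul[of "-2" "fst \<omega>" "-1" "fst z"] homog_fmul[of "2" "snd \<omega>" "-1" "fst z"]
    by (subst sa_Cons) (auto simp: x wfA_def wfOm_def wfS_def sa_single padd_def fadd_def)
qed
lemma wfB_sb: "twf wfOm wfS u \<Longrightarrow> wfB (sb u)"
proof (induction u)
  case Nil then show ?case by (simp add: wfB_def)
next
  case (Cons x t) obtain c \<omega> z where x: "x = (c,\<omega>,z)" by (cases x) auto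
  then have "wfOm \<omega>" "wfS z" "twf wfOm wfS t" using Cons.prems by auto
  moreover have "wfB (sb t)" using Cons.IH \<open>twf wfOm wfS t\<close> by simp
  ultimately show ?case using homog_fmul[of "-2" "fst \<omega>" "1" "snd z"] homog_fmul[of "2" "snd \<omega>" "1" "snd z"]
    by (subst sb_Cons) (auto simp: x wfB_def wfOm_def wfS_def sb_single padd_def fadd_def)
qed

lemma TE_null_any: "wfS P \<Longrightarrow> TE q [(c, ([],[]), P)] []"
proof -
  assume P: "wfS P"
  have w: "wfOm ([],[])" by (simp add: wfOm_def)
  have "TE q [(c, psc 0 ([],[]), P)] [(c*0, ([],[]), P)]" by (rule TE_scL[OF w P])
  then have "TE q [(c, ([],[]), P)] [(0, ([],[]), P)]" by (simp add: psc_def)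
  then show ?thesis using teq_zero teq_trans by blast
qed

lemma shp_zero: "TE q (shp q ([],[]) ([],[])) []"
proof -
  have "TE q ([(1, ([],[]), (gd,[]))] @ [(- inverse (of_real q), ([],[]), (gb,[]))] @ [(1, ([],[]), ([],ga))] @ [(- of_real q, ([],[]), ([],gc))]) ([] @ [] @ [] @ [])"
    by (intro teq_app TE_null_any wfS_basis)
  then show ?thesis by (simp add: shp_def prmul_def)
qed

lemma wfOm_shp_parts: "wfA a \<Longrightarrow> wfB b \<Longrightarrow> wfOm (prmul a ga) \<and> wfOm (prmul a gc) \<and> wfOm (prmul b gd) \<and> wfOm (prmul b gb)"
  using twf_shp[of a b] by (simp add: shp_def)

lemma shp_add: assumes "wfA a" "wfB b" "wfA a'" "wfB b'"
  shows "TE q (shp q a b @ shp q a' b') (shp q (padd a a') (padd b b'))"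
proof -
  note w = wfOm_shp_parts[OF assms(1,2)] wfOm_shp_parts[OF assms(3,4)]
  let ?Q = "complex_of_real q"
  have "TE q (shp q a b @ shp q a' b')
     ([(1, prmul a ga, (gd,[])), (1, prmul a' ga, (gd,[]))] @ [(- inverse ?Q, prmul a gc, (gb,[])), (- inverse ?Q, prmul a' gc, (gb,[]))]
      @ [(1, prmul b gd, ([],ga)), (1, prmul b' gd, ([],ga))] @ [(- ?Q, prmul b gb, ([],gc)), (- ?Q, prmul b' gb, ([],gc))])"
    by (rule teq_tcoef) (simp add: shp_def fun_eq_iff algebra_simps)
  also have "TE q \<dots> ([(1, padd (prmul a ga) (prmul a' ga), (gd,[]))] @ [(- inverse ?Q, padd (prmul a gc) (prmul a' gc), (gb,[]))]
      @ [(1, padd (prmul b gd) (prmul b' gd), ([],ga))] @ [(- ?Q, padd (prmul b gb) (prmul b' gb), ([],gc))])"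
    using w by (intro teq_app teq_sym[OF TE_addL] wfS_basis) auto
  also have "\<dots> = shp q (padd a a') (padd b b')"
    by (simp add: shp_def padd_def prmul_def fadd_def)
  finally show ?thesis .
qed

lemma shp_tsc: assumes "wfA a" "wfB b"
  shows "TE q (tsc k (shp q a b)) (shp q (psc k a) (psc k b))"
proof -
  note w = wfOm_shp_parts[OF assms(1,2)]
  let ?Q = "complex_of_real q"
  have "TE q (shp q (psc k a) (psc k b))
      ([(1, psc k (prmul a ga), (gd,[]))] @ [(- inverse ?Q, psc k (prmul a gc), (gb,[]))]
      @ [(1, psc k (prmul b gd), ([],ga))] @ [(- ?Q, psc k (prmul b gb), ([],gc))])"
    by (simp add: shp_def prmul_psc)
  also have "TE q \<dots> ([(1*k, prmul a ga, (gd,[]))] @ [(- inverse ?Q * k, prmul a gc, (gb,[]))]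
      @ [(1*k, prmul b gd, ([],ga))] @ [(- ?Q * k, prmul b gb, ([],gc))])"
    using w by (intro teq_app TE_scL wfS_basis) auto
  also have "TE q \<dots> (tsc k (shp q a b))"
    by (rule teq_tcoef) (simp add: shp_def fun_eq_iff algebra_simps)
  finally show ?thesis by (rule teq_sym)
qed

lemma TE_shp: assumes "wfA a" "wfB b" "wfA a'" "wfB b'" "peq q a a'" "peq q b b'"
  shows "TE q (shp q a b) (shp q a' b')"
proof -
  note w = wfOm_shp_parts[OF assms(1,2)] wfOm_shp_parts[OF assms(3,4)]
  have p: "peq q (prmul a g) (prmul a' g)" "peq q (prmul b g) (prmul b' g)" for g
    using assms(5,6) by (auto simp: peq_iff abs_pair_simps intro: mq_rmul)
  have "TE q ([(1, prmul a ga, (gd,[]))] @ [(- inverse (of_real q), prmul a gc, (gb,[]))]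
      @ [(1, prmul b gd, ([],ga))] @ [(- of_real q, prmul b gb, ([],gc))])
     ([(1, prmul a' ga, (gd,[]))] @ [(- inverse (of_real q), prmul a' gc, (gb,[]))]
      @ [(1, prmul b' gd, ([],ga))] @ [(- of_real q, prmul b' gb, ([],gc))])"
    using w by (intro teq_app TE_repL wfS_basis p) auto
  then show ?thesis by (simp add: shp_def)
qed

lemma single_shp: assumes "wfOm \<omega>" "wfS z"
  shows "TE q [(c, \<omega>, z)] (shp q (sa [(c,\<omega>,z)]) (sb [(c,\<omega>,z)]))"
proof -
  let ?Q = "complex_of_real q"
  let ?a = "sa [(c,\<omega>,z)]" and ?b = "sb [(c,\<omega>,z)]"
  have wab: "wfA ?a" "wfB ?b" using wfA_sa wfB_sb assms by auto
  note w = wfOm_shp_parts[OF wab]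
  have "TE q [(c, \<omega>, z)] (NF q [(c, \<omega>, z)])" by (rule norm1[OF assms])
  also have "NF q [(c, \<omega>, z)] = [(1, prmul ?a ga, (gd,[]))] @ [(1, psc (- inverse ?Q) (prmul ?a gc), (gb,[]))]
      @ [(1, prmul ?b gd, ([],ga))] @ [(1, psc (- ?Q) (prmul ?b gb), ([],gc))]"
    by (simp add: NF_def phi_def sa_def sb_def prmul_def psc_def fmul_fsc1 fmul_assoc)
  also have "TE q \<dots> ([(1, prmul ?a ga, (gd,[]))] @ [(1 * (- inverse ?Q), prmul ?a gc, (gb,[]))]
      @ [(1, prmul ?b gd, ([],ga))] @ [(1 * (- ?Q), prmul ?b gb, ([],gc))])"
    using w by (intro teq_app TE_scL teq_refl wfS_basis) auto
  also have "\<dots> = shp q ?a ?b" by (simp add: shp_def)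
  finally show ?thesis .
qed

lemma TE_sab: "twf wfOm wfS u \<Longrightarrow> TE q u (shp q (sa u) (sb u))"
proof (induction u)
  case Nil then show ?case using shp_zero teq_sym by simp
next
  case (Cons x t) obtain c \<omega> z where x: "x = (c,\<omega>,z)" by (cases x) auto
  then have w: "wfOm \<omega>" "wfS z" "twf wfOm wfS t" using Cons.prems by auto
  have "TE q (x#t) (shp q (sa [x]) (sb [x]) @ shp q (sa t) (sb t))"
    unfolding x by (rule teq_Cons[OF single_shp[OF w(1,2)] Cons.IH[OF w(3)]])
  also have "TE q \<dots> (shp q (padd (sa [x]) (sa t)) (padd (sb [x]) (sb t)))"
    using w x by (intro shp_add wfA_sa wfB_sb) auto
  also have "\<dots> = shp q (sa (x#t)) (sb (x#t))" by (simp only: sa_Cons[symmetric] sb_Cons[symmetric])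
  finally show ?case .
qed

lemma TE_by_sab: assumes "twf wfOm wfS u" "twf wfOm wfS u'" "peq q (sa u) (sa u')" "peq q (sb u) (sb u')"
  shows "TE q u u'"
proof -
  have "TE q (shp q (sa u) (sb u)) (shp q (sa u') (sb u'))"
    using assms by (intro TE_shp wfA_sa wfB_sb)
  then show ?thesis using teq_trans[OF TE_sab[OF assms(1)] teq_trans[OF _ teq_sym[OF TE_sab[OF assms(2)]]]] by blast
qed

lemma sab_shp:
  "F (sa (shp q a b)) = F a * U1 q" "S (sa (shp q a b)) = S a * U1 q"
  "F (sb (shp q a b)) = F b * U2 q" "S (sb (shp q a b)) = S b * U2 q"
  by (simp_all add: shp_def sab_abs prmul_def algebra_simps sc_neg)

lemma mq_U1: "mq q (x * U1 q) x" using mq_u1[of q x 1] by simp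
lemma mq_U2: "mq q (x * U2 q) x" using mq_u2[of q x 1] by simp




section \<open>The connection\<close>

lemma abs_dplus[simp]: "abs_fp (dplus q p) = Dp q (abs_fp p)" by (simp add: dplus_dgl Dg.abs_eq)
lemma abs_dminus[simp]: "abs_fp (dminus q p) = Dm q (abs_fp p)" by (simp add: dminus_dgl Dg.abs_eq)
lemma abs_fstar[simp]: "abs_fp (fstar q p) = St q (abs_fp p)" by (simp add: St.abs_eq)
lemma pd_simps[simp]: "fst (pd q x) = dplus q x" "snd (pd q x) = dminus q x" by (simp_all add: pd_def)
declare abs_pair_simps[simp]

lemma wfA_pd: "homog (-1) x \<Longrightarrow> wfA (psc k (pd q x))"
  using homog_dplus[of "-1" x q] homog_dminus[of "-1" x q] by (simp add: wfA_def)
lemma wfB_pd: "homog 1 y \<Longrightarrow> wfB (psc k (pd q y))"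
  using homog_dplus[of "1" y q] homog_dminus[of "1" y q] by (simp add: wfB_def)
lemma wfOm_pd: "homog 0 b \<Longrightarrow> wfOm (pd q b)"
  using homog_dplus[of 0 b q] homog_dminus[of 0 b q] by (simp add: wfOm_def)
lemma wfA_pl: "homog (-1) x \<Longrightarrow> wfOm w \<Longrightarrow> wfA (psc k (plmul x w))"
  using homog_fmul[of "-1" x "-2" "fst w"] homog_fmul[of "-1" x "2" "snd w"] by (simp add: wfA_def wfOm_def)
lemma wfB_pl: "homog 1 y \<Longrightarrow> wfOm w \<Longrightarrow> wfB (psc k (plmul y w))"
  using homog_fmul[of "1" y "-2" "fst w"] homog_fmul[of "1" y "2" "snd w"] by (simp add: wfB_def wfOm_def)

lemma wfA_psc: "wfA a \<Longrightarrow> wfA (psc k a)" by (simp add: wfA_def psc_def)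
lemma wfB_psc: "wfB a \<Longrightarrow> wfB (psc k a)" by (simp add: wfB_def psc_def)

lemma C1: "wfS s \<Longrightarrow> twf wfOm wfS (nablaS q s)"
  unfolding nablaS_shp by (rule twf_shp) (auto simp: wfS_def intro: wfA_pd wfB_pd)

lemma C2: assumes q: "q \<noteq> 0" and "wfS s" "wfS s'" "peq q s s'" shows "TE q (nablaS q s) (nablaS q s')"
  unfolding nablaS_shp using assms
  by (intro TE_shp wfA_pd wfB_pd) (auto simp: wfS_def peq_iff intro!: mq_sc mq_Dp mq_Dm)

lemma C3: assumes "wfS s" "wfS s'" shows "TE q (nablaS q (padd s s')) (nablaS q s @ nablaS q s')"
proof -
  have "TE q (nablaS q s @ nablaS q s') (shp q (padd (psc (of_real q) (pd q (fst s))) (psc (of_real q) (pd q (fst s'))))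
      (padd (psc (inverse (of_real q)) (pd q (snd s))) (psc (inverse (of_real q)) (pd q (snd s')))))"
    unfolding nablaS_shp using assms by (intro shp_add wfA_pd wfB_pd) (auto simp: wfS_def)
  moreover have "nablaS q (padd s s') = shp q (padd (psc (of_real q) (pd q (fst s))) (psc (of_real q) (pd q (fst s'))))
      (padd (psc (inverse (of_real q)) (pd q (snd s))) (psc (inverse (of_real q)) (pd q (snd s'))))"
    unfolding nablaS_shp by (simp add: padd_def psc_def pd_def fadd_def dplus_def dminus_def)
  ultimately show ?thesis using teq_sym by metis
qed

lemma C4: assumes "wfS s" shows "TE q (nablaS q (psc k s)) (tsc k (nablaS q s))"
proof -
  have "TE q (tsc k (nablaS q s)) (shp q (psc k (psc (of_real q) (pd q (fst s)))) (psc k (psc (inverse (of_real q)) (pd q (snd s)))))"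
    unfolding nablaS_shp using assms by (intro shp_tsc wfA_pd wfB_pd) (auto simp: wfS_def)
  moreover have "TE q (nablaS q (psc k s)) (shp q (psc k (psc (of_real q) (pd q (fst s)))) (psc k (psc (inverse (of_real q)) (pd q (snd s)))))"
    unfolding nablaS_shp using assms
    by (intro TE_shp wfA_psc wfB_psc wfA_pd wfB_pd) (auto simp: wfS_def psc_def peq_iff mult.commute dgl_fsc dplus_dgl dminus_dgl intro!: mq_eq)
  ultimately show ?thesis using teq_sym teq_trans by metis
qed

lemma mq_via: "mq q x x' \<Longrightarrow> mq q y y' \<Longrightarrow> x' = y' \<Longrightarrow> mq q x y"
  using mq_sym mq_trans by blast

lemma twf_tlmul: "homog 0 b \<Longrightarrow> twf wfOm wfS u \<Longrightarrow> twf wfOm wfS (tlmul b u)"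
  by (induction u) (auto simp: tlmul_def wfOm_plmul)
lemma twf_trmul: "homog 0 b \<Longrightarrow> twf M wfS u \<Longrightarrow> twf M wfS (trmul u b)"
  by (induction u) (auto simp: trmul_def wfS_prmul)

lemma sab_tlmul:
  "F (sa (tlmul b u)) = abs_fp b * F (sa u)" "S (sa (tlmul b u)) = abs_fp b * S (sa u)"
  "F (sb (tlmul b u)) = abs_fp b * F (sb u)" "S (sb (tlmul b u)) = abs_fp b * S (sb u)"
  by (induction u) (auto simp: tlmul_def sab_abs algebra_simps mult.assoc plmul_def)
lemma sab_trmul:
  "F (sa (trmul u b)) = F (sa u) * abs_fp b" "S (sa (trmul u b)) = S (sa u) * abs_fp b"
  "F (sb (trmul u b)) = F (sb u) * abs_fp b" "S (sb (trmul u b)) = S (sb u) * abs_fp b"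
  by (induction u) (auto simp: trmul_def sab_abs algebra_simps mult.assoc prmul_def)
lemma sab_append:
  "F (sa (u@u')) = F (sa u) + F (sa u')" "S (sa (u@u')) = S (sa u) + S (sa u')"
  "F (sb (u@u')) = F (sb u) + F (sb u')" "S (sb (u@u')) = S (sb u) + S (sb u')"
  by (simp_all add: sab_abs)
lemma sab_single:
  "F (sa [(c,\<omega>,z)]) = sc c (F \<omega> * F z)" "S (sa [(c,\<omega>,z)]) = sc c (S \<omega> * F z)"
  "F (sb [(c,\<omega>,z)]) = sc c (F \<omega> * S z)" "S (sb [(c,\<omega>,z)]) = sc c (S \<omega> * S z)"
  by (simp_all add: sab_abs)

lemma qq1: "q \<noteq> 0 \<Longrightarrow> sc (complex_of_real q) (sc (inverse (complex_of_real q)) x) = x"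
  by simp
lemma qq2: "q \<noteq> 0 \<Longrightarrow> sc (inverse (complex_of_real q)) (sc (complex_of_real q) x) = x"
  by simp

lemma C5: assumes q: "q \<noteq> 0" and b: "homog 0 b" and s: "wfS s"
  shows "TE q (nablaS q (plmul b s)) ([(1, pd q b, s)] @ tlmul b (nablaS q s))"
proof -
  let ?Q = "complex_of_real q"
  let ?X = "abs_fp (fst s)" and ?Y = "abs_fp (snd s)" and ?B = "abs_fp b"
  have hX: "hom (-1) ?X" "hom 1 ?Y" using s by (auto simp: wfS_def intro: hom_abs)
  have s': "wfS (plmul b s)" using wfS_plmul[OF b s] .
  have tw: "twf wfOm wfS (nablaS q (plmul b s))" "twf wfOm wfS ([(1, pd q b, s)] @ tlmul b (nablaS q s))"
    using C1[OF s'] C1[OF s] wfOm_pd[OF b] s twf_tlmul[OF b] by auto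
  have e1: "Dp q (?B * ?X) = sc (inverse ?Q) (Dp q ?B * ?X) + ?B * Dp q ?X"
    using Dg_leibniz[OF q hX(1)] by (simp add: power_int_minus)
  have e2: "Dm q (?B * ?X) = sc (inverse ?Q) (Dm q ?B * ?X) + ?B * Dm q ?X"
    using Dg_leibniz[OF q hX(1)] by (simp add: power_int_minus)
  have e3: "Dp q (?B * ?Y) = sc ?Q (Dp q ?B * ?Y) + ?B * Dp q ?Y"
    using Dg_leibniz[OF q hX(2)] by simp
  have e4: "Dm q (?B * ?Y) = sc ?Q (Dm q ?B * ?Y) + ?B * Dm q ?Y"
    using Dg_leibniz[OF q hX(2)] by simp
  show ?thesis
  proof (rule TE_by_sab[OF tw])
    show "peq q (sa (nablaS q (plmul b s))) (sa ([(1, pd q b, s)] @ tlmul b (nablaS q s)))"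
      unfolding peq_iff sab_append sab_tlmul sab_single nablaS_shp sab_shp
    proof
      show "mq q (F (psc ?Q (pd q (fst (plmul b s)))) * U1 q)
         (sc 1 (F (pd q b) * ?X) + ?B * (F (psc ?Q (pd q (fst s))) * U1 q))"
        by (rule mq_via[OF mq_U1 mq_add[OF mq_refl mq_lmul[OF mq_U1]]]) (simp add: plmul_def e1 q)
      show "mq q (S (psc ?Q (pd q (fst (plmul b s)))) * U1 q)
         (sc 1 (S (pd q b) * ?X) + ?B * (S (psc ?Q (pd q (fst s))) * U1 q))"
        by (rule mq_via[OF mq_U1 mq_add[OF mq_refl mq_lmul[OF mq_U1]]]) (simp add: plmul_def e2 q)
    qed
    show "peq q (sb (nablaS q (plmul b s))) (sb ([(1, pd q b, s)] @ tlmul b (nablaS q s)))"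
      unfolding peq_iff sab_append sab_tlmul sab_single nablaS_shp sab_shp
    proof
      show "mq q (F (psc (inverse ?Q) (pd q (snd (plmul b s)))) * U2 q)
         (sc 1 (F (pd q b) * ?Y) + ?B * (F (psc (inverse ?Q) (pd q (snd s))) * U2 q))"
        by (rule mq_via[OF mq_U2 mq_add[OF mq_refl mq_lmul[OF mq_U2]]]) (simp add: plmul_def e3 q)
      show "mq q (S (psc (inverse ?Q) (pd q (snd (plmul b s)))) * U2 q)
         (sc 1 (S (pd q b) * ?Y) + ?B * (S (psc (inverse ?Q) (pd q (snd s))) * U2 q))"
        by (rule mq_via[OF mq_U2 mq_add[OF mq_refl mq_lmul[OF mq_U2]]]) (simp add: plmul_def e4 q)
    qed
  qed
qed

section \<open>The generalised braiding\<close>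

lemma sab_tsc:
  "F (sa (tsc k u)) = sc k (F (sa u))" "S (sa (tsc k u)) = sc k (S (sa u))"
  "F (sb (tsc k u)) = sc k (F (sb u))" "S (sb (tsc k u)) = sc k (S (sb u))"
  by (induction u) (auto simp: sab_abs tsc_def)

lemma twf_tsc[simp]: "twf M N (tsc k u) \<longleftrightarrow> twf M N u" by (induction u) (auto simp: tsc_def)

lemma sigmaS_Nil[simp]: "sigmaS q [] = []" by (simp add: sigmaS_def)
lemma sigmaS_Cons[simp]: "sigmaS q ((c,s,w)#t) = tsc c (sigmaS1 q s w) @ sigmaS q t" by (simp add: sigmaS_def)
lemma sigmaS_append[simp]: "sigmaS q (t@t') = sigmaS q t @ sigmaS q t'" by (simp add: sigmaS_def)

lemma C6: "twf wfS wfOm t \<Longrightarrow> twf wfOm wfS (sigmaS q t)"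
proof (induction t)
  case Nil then show ?case by simp
next
  case (Cons x t) obtain c s w where x: "x = (c,s,w)" by (cases x) auto
  then have "wfS s" "wfOm w" "twf wfS wfOm t" using Cons.prems by auto
  moreover have "twf wfOm wfS (sigmaS q t)" using Cons.IH \<open>twf wfS wfOm t\<close> by blast
  moreover have "homog (-1) (fst s)" "homog 1 (snd s)" using \<open>wfS s\<close> by (auto simp: wfS_def)
  ultimately have "homog (-1) (fst s)" "homog 1 (snd s)" "wfOm w" "twf wfOm wfS (sigmaS q t)" by auto
  then show ?case unfolding x sigmaS_Cons sigmaS1_shp
    by (auto intro!: twf_shp wfA_pl wfB_pl)
qed

definition hsw :: "(pr \<Rightarrow> fa) \<Rightarrow> (pr \<Rightarrow> fa) \<Rightarrow> pr \<times> pr \<Rightarrow> fp" where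
  "hsw s1 s2 u = abs_fp (s1 (fst u)) * abs_fp (s2 (snd u))"

definition gsum :: "(pr \<Rightarrow> fa) \<Rightarrow> (pr \<Rightarrow> fa) \<Rightarrow> ten \<Rightarrow> fp" where
  "gsum s1 s2 t = sum_list (map (\<lambda>(c,u). sc c (hsw s1 s2 u)) t)"

lemma gsum_Nil[simp]: "gsum s1 s2 [] = 0" by (simp add: gsum_def)
lemma gsum_Cons[simp]: "gsum s1 s2 ((c,u)#t) = sc c (hsw s1 s2 u) + gsum s1 s2 t" by (simp add: gsum_def)
lemma gsum_append[simp]: "gsum s1 s2 (t@t') = gsum s1 s2 t + gsum s1 s2 t'" by (simp add: gsum_def)
lemma gsum_tsc[simp]: "gsum s1 s2 (tsc k t) = sc k (gsum s1 s2 t)" by (induction t) (auto simp: gsum_def tsc_def)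

lemma sab_sigmaS:
  "F (sa (sigmaS q t)) = sc (of_real q) (gsum fst fst t * U1 q)"
  "S (sa (sigmaS q t)) = sc (of_real q) (gsum fst snd t * U1 q)"
  "F (sb (sigmaS q t)) = sc (inverse (of_real q)) (gsum snd fst t * U2 q)"
  "S (sb (sigmaS q t)) = sc (inverse (of_real q)) (gsum snd snd t * U2 q)"
  by (induction t) (auto simp: sab_append sab_tsc sigmaS1_shp sab_shp hsw_def algebra_simps)

lemma gsum_tnull: assumes q: "q \<noteq> 0" and r: "r \<in> tnull q wfS wfOm"
  and sel1: "sel1 = fst \<or> sel1 = snd" and sel2: "sel2 = fst \<or> sel2 = snd"
  shows "gsum sel1 sel2 r \<in> Iq q"
  using r
proof (induction rule: tnull.induct)
  case tn_nil then show ?case by simp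
next
  case (tn_add t t') then show ?case by (simp add: Iq_add)
next
  case (tn_sc t k) then show ?case by (simp add: Iq_sc)
next
  case (tn_addL m1 m2 n) then show ?case using sel1
    by (auto simp: hsw_def padd_def fadd_def algebra_simps sc_neg)
next
  case (tn_addR m n1 n2) then show ?case using sel2
    by (auto simp: hsw_def padd_def fadd_def algebra_simps sc_neg)
next
  case (tn_scL m n k) then show ?case using sel1
    by (auto simp: hsw_def psc_def algebra_simps sc_neg)
next
  case (tn_scR m n k) then show ?case using sel2
    by (auto simp: hsw_def psc_def algebra_simps sc_neg)
next
  case (tn_bal b m n) then show ?case using sel1 sel2
    by (auto simp: hsw_def prmul_def plmul_def algebra_simps sc_neg mult.assoc)
next
  case (tn_repL m m' n)
  have "mq q (abs_fp (sel1 m)) (abs_fp (sel1 m'))" using tn_repL(3) sel1 by (auto simp: peq_iff)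
  then have "mq q (abs_fp (sel1 m) * abs_fp (sel2 n)) (abs_fp (sel1 m') * abs_fp (sel2 n))" by (rule mq_rmul)
  then show ?case by (simp add: hsw_def mq_def sc_neg)
next
  case (tn_repR m n n')
  have "mq q (abs_fp (sel2 n)) (abs_fp (sel2 n'))" using tn_repR(4) sel2 by (auto simp: peq_iff)
  then have "mq q (abs_fp (sel1 m) * abs_fp (sel2 n)) (abs_fp (sel1 m) * abs_fp (sel2 n'))" by (rule mq_lmul)
  then show ?case by (simp add: hsw_def mq_def sc_neg)
qed

lemma gsum_teq: assumes q: "q \<noteq> 0" and te: "teq q wfS wfOm t t'"
  and sel1: "sel1 = fst \<or> sel1 = snd" and sel2: "sel2 = fst \<or> sel2 = snd"
  shows "mq q (gsum sel1 sel2 t) (gsum sel1 sel2 t')"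
proof -
  obtain r where r: "r \<in> tnull q wfS wfOm" "tcoef (tsub t t') = tcoef r" using te teq_def by auto
  have "gsum sel1 sel2 (tsub t t') = gsum sel1 sel2 r"
    unfolding gsum_def using r(2)
    by (intro gco_lin[where F=sc]) (auto simp: tcoef_gco sc_addk)
  moreover have "gsum sel1 sel2 (tsub t t') = gsum sel1 sel2 t - gsum sel1 sel2 t'"
    by (simp add: tsub_def sc_neg)
  ultimately show ?thesis using gsum_tnull[OF q r(1) sel1 sel2] by (simp add: mq_def)
qed

lemma C7: assumes q: "q \<noteq> 0" and "twf wfS wfOm t" "twf wfS wfOm t'" "teq q wfS wfOm t t'"
  shows "TE q (sigmaS q t) (sigmaS q t')"
  using assms
  by (intro TE_by_sab C6) (auto simp: peq_iff sab_sigmaS intro!: mq_sc mq_rmul gsum_teq)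

lemma C8: "TE q (sigmaS q (t @ t')) (sigmaS q t @ sigmaS q t')" by simp

lemma tsc_tsc: "tsc k (tsc l t) = tsc (k*l) t" by (induction t) (auto simp: tsc_def)
lemma C9: "TE q (sigmaS q (tsc k t)) (tsc k (sigmaS q t))"
proof -
  have "tcoef (sigmaS q (tsc k t)) = tcoef (tsc k (sigmaS q t))"
    by (induction t) (auto simp: fun_eq_iff algebra_simps)
  then show ?thesis by (rule teq_tcoef)
qed

lemma twf_tlmul_S: "homog 0 b \<Longrightarrow> twf wfS wfOm u \<Longrightarrow> twf wfS wfOm (tlmul b u)"
  by (induction u) (auto simp: tlmul_def wfS_plmul)
lemma twf_trmul_S: "homog 0 b \<Longrightarrow> twf wfS wfOm u \<Longrightarrow> twf wfS wfOm (trmul u b)"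
  by (induction u) (auto simp: trmul_def wfOm_prmul)

lemma gsum_tlmul: "s1 = fst \<or> s1 = snd \<Longrightarrow> gsum s1 s2 (tlmul b t) = abs_fp b * gsum s1 s2 t"
  by (induction t) (auto simp: tlmul_def hsw_def plmul_def algebra_simps mult.assoc)
lemma gsum_trmul: "s2 = fst \<or> s2 = snd \<Longrightarrow> gsum s1 s2 (trmul t b) = gsum s1 s2 t * abs_fp b"
  by (induction t) (auto simp: trmul_def hsw_def prmul_def algebra_simps mult.assoc)

lemma C10: assumes "homog 0 b" "twf wfS wfOm t"
  shows "TE q (sigmaS q (tlmul b t)) (tlmul b (sigmaS q t))"
  using assms
  by (intro TE_by_sab C6 twf_tlmul_S twf_tlmul)
     (auto simp: peq_iff sab_sigmaS sab_tlmul gsum_tlmul mult.assoc intro!: mq_eq)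

lemma C11: assumes "homog 0 b" "twf wfS wfOm t"
  shows "TE q (sigmaS q (trmul t b)) (trmul (sigmaS q t) b)"
proof (rule TE_by_sab)
  show "twf wfOm wfS (sigmaS q (trmul t b))" "twf wfOm wfS (trmul (sigmaS q t) b)"
    using assms by (auto intro!: C6 twf_trmul_S twf_trmul)
  have m1: "mq q (sc k (G * B * U) ) (sc k (G * U * B))" if "U = U1 q \<or> U = U2 q" for k G B U
  proof -
    have "mq q (G * B * U1 q) (G * U1 q * B)" "mq q (G * B * U2 q) (G * U2 q * B)"
      using mq_via[OF mq_U1[of q "G*B"] mq_u1[of q G B]] mq_via[OF mq_U2[of q "G*B"] mq_u2[of q G B]] by auto
    then show ?thesis using that by (auto intro: mq_sc)
  qed
  show "peq q (sa (sigmaS q (trmul t b))) (sa (trmul (sigmaS q t) b))"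
       "peq q (sb (sigmaS q (trmul t b))) (sb (trmul (sigmaS q t) b))"
    unfolding peq_iff sab_trmul sab_sigmaS
    by (auto simp: gsum_trmul intro!: m1[simplified])
qed

lemma C12: assumes q: "q \<noteq> 0" and b: "homog 0 b" and s: "wfS s"
  shows "TE q (nablaS q (prmul s b)) (trmul (nablaS q s) b @ sigmaS q [(1, s, pd q b)])"
proof -
  let ?Q = "complex_of_real q"
  let ?X = "abs_fp (fst s)" and ?Y = "abs_fp (snd s)" and ?B = "abs_fp b"
  have hB: "hom 0 ?B" using b by (auto intro: hom_abs)
  have s': "wfS (prmul s b)" using wfS_prmul[OF b s] .
  have tw: "twf wfOm wfS (nablaS q (prmul s b))" "twf wfOm wfS (trmul (nablaS q s) b @ sigmaS q [(1, s, pd q b)])"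
    using C1[OF s'] twf_trmul[OF b C1[OF s]] C6[of "[(1, s, pd q b)]" q] wfOm_pd[OF b] s by auto
  have e: "Dp q (?X * ?B) = Dp q ?X * ?B + ?X * Dp q ?B" "Dm q (?X * ?B) = Dm q ?X * ?B + ?X * Dm q ?B"
       "Dp q (?Y * ?B) = Dp q ?Y * ?B + ?Y * Dp q ?B" "Dm q (?Y * ?B) = Dm q ?Y * ?B + ?Y * Dm q ?B"
    using Dg_leibniz[OF q hB] by simp_all
  show ?thesis
  proof (rule TE_by_sab[OF tw])
    show "peq q (sa (nablaS q (prmul s b))) (sa (trmul (nablaS q s) b @ sigmaS q [(1, s, pd q b)]))"
      unfolding peq_iff sab_append sab_trmul sab_sigmaS
      unfolding nablaS_shp sab_shp
    proof
      show "mq q (F (psc ?Q (pd q (fst (prmul s b)))) * U1 q)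
          (F (psc ?Q (pd q (fst s))) * U1 q * ?B + sc ?Q (gsum fst fst [(1, s, pd q b)] * U1 q))"
        by (rule mq_via[OF mq_U1 mq_add[OF mq_u1 mq_sc[OF mq_U1]]]) (simp add: prmul_def e hsw_def algebra_simps)
      show "mq q (S (psc ?Q (pd q (fst (prmul s b)))) * U1 q)
          (S (psc ?Q (pd q (fst s))) * U1 q * ?B + sc ?Q (gsum fst snd [(1, s, pd q b)] * U1 q))"
        by (rule mq_via[OF mq_U1 mq_add[OF mq_u1 mq_sc[OF mq_U1]]]) (simp add: prmul_def e hsw_def algebra_simps)
    qed
    show "peq q (sb (nablaS q (prmul s b))) (sb (trmul (nablaS q s) b @ sigmaS q [(1, s, pd q b)]))"
      unfolding peq_iff sab_append sab_trmul sab_sigmaS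
      unfolding nablaS_shp sab_shp
    proof
      show "mq q (F (psc (inverse ?Q) (pd q (snd (prmul s b)))) * U2 q)
          (F (psc (inverse ?Q) (pd q (snd s))) * U2 q * ?B + sc (inverse ?Q) (gsum snd fst [(1, s, pd q b)] * U2 q))"
        by (rule mq_via[OF mq_U2 mq_add[OF mq_u2 mq_sc[OF mq_U2]]]) (simp add: prmul_def e hsw_def algebra_simps)
      show "mq q (S (psc (inverse ?Q) (pd q (snd (prmul s b)))) * U2 q)
          (S (psc (inverse ?Q) (pd q (snd s))) * U2 q * ?B + sc (inverse ?Q) (gsum snd snd [(1, s, pd q b)] * U2 q))"
        by (rule mq_via[OF mq_U2 mq_add[OF mq_u2 mq_sc[OF mq_U2]]]) (simp add: prmul_def e hsw_def algebra_simps)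
    qed
  qed
qed

section \<open>Clifford action and Dirac operator\<close>

lemma cliff_sab: "F (cliff \<alpha> \<beta> t) = sc \<alpha> (F (sb t))" "S (cliff \<alpha> \<beta> t) = sc \<beta> (S (sa t))"
  by (induction t) (auto simp: cliff_def cliff1_def sab_abs algebra_simps)

lemma conj2: assumes q: "q \<noteq> 0" and s: "wfS s"
  shows "peq q (cliff \<alpha> \<beta> (nablaS q s)) (DiracS q \<alpha> \<beta> s)"
  unfolding peq_iff cliff_sab nablaS_shp sab_shp
  by (auto simp: DiracS_def intro!: mq_sc mq_via[OF mq_U2 mq_refl] mq_via[OF mq_U1 mq_refl])

lemma spin_abs[simp]:
  "F (JS q \<delta> s) = sc (- of_real (inverse \<delta>)) (St q (S s))"
  "S (JS q \<delta> s) = sc (of_real \<delta>) (St q (F s))"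
  "F (JSinv q \<delta> s) = - sc (- of_real (inverse \<delta>)) (St q (S s))"
  "S (JSinv q \<delta> s) = - sc (of_real \<delta>) (St q (F s))"
  "F (gammaS s) = F s" "S (gammaS s) = - S s"
  "F (DiracS q \<alpha> \<beta> s) = sc (\<alpha> * inverse (of_real q)) (Dp q (S s))"
  "S (DiracS q \<alpha> \<beta> s) = sc (\<beta> * of_real q) (Dm q (F s))"
  "F (plmul a s) = abs_fp a * F s" "S (plmul a s) = abs_fp a * S s"
  "F (pneg s) = - F s" "S (pneg s) = - S s"
  "F (psub s s') = F s - F s'" "S (psub s s') = S s - S s'"
  by (simp_all add: JS_def JSinv_def pneg_def gammaS_def DiracS_def psub_def sc_neg dplus_dgl dminus_dgl Dg.abs_eq)

lemma peq_eqI: "F m = F m' \<Longrightarrow> S m = S m' \<Longrightarrow> peq q m m'"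
  by (simp add: peq_iff)

lemma cnj_of_real_sc[simp]: "sc (cnj (complex_of_real r)) x = sc (complex_of_real r) x" by simp

lemma conj3: assumes q: "q \<noteq> 0" and d: "\<delta> \<noteq> 0"
  shows "peq q (JS q \<delta> (JSinv q \<delta> s)) s" "peq q (JSinv q \<delta> (JS q \<delta> s)) s"
  using q d by (auto intro!: peq_eqI simp: St_St sc_neg)

lemma conj4: assumes q: "q \<noteq> 0" and d: "\<delta> \<noteq> 0"
  shows "peq q (JS q \<delta> (JS q \<delta> s)) (pneg s)"
  using q d by (auto intro!: peq_eqI simp: St_St sc_neg)

lemma conj5: "peq q (JS q \<delta> (gammaS s)) (pneg (gammaS (JS q \<delta> s)))"
  by (auto intro!: peq_eqI simp: sc_neg)

lemma conj6: "peq q (gammaS (gammaS s)) s"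
  by (auto intro!: peq_eqI)

lemma conj7: "peq q (gammaS (plmul a s)) (plmul a (gammaS s))"
  by (auto intro!: peq_eqI)

lemma conj8: "peq q (DiracS q \<alpha> \<beta> (gammaS s)) (pneg (gammaS (DiracS q \<alpha> \<beta> s)))"
  by (auto intro!: peq_eqI)

lemma conj9: assumes q: "q \<noteq> 0" and d: "\<delta> \<noteq> 0"
  shows "peq q (plmul a (JS q \<delta> (plmul b (JSinv q \<delta> s)))) (JS q \<delta> (plmul b (JSinv q \<delta> (plmul a s))))"
  using q d by (auto intro!: peq_eqI simp: St_St St_mult sc_neg mult.assoc)

lemma St_Dp: assumes q: "q \<noteq> 0" and h: "hom 1 y" shows "St q (Dp q y) = - Dm q (St q y)"
proof -
  have h': "hom (-1) (St q y)" using hom_St[OF h] by simp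
  have "St q (Dm q (St q y)) = - Dp q y" using St_Dm[OF q h'] by (simp add: St_St[OF q])
  then have "St q (St q (Dm q (St q y))) = St q (- Dp q y)" by simp
  then show ?thesis by (simp add: St_St[OF q])
qed

lemma conj10: assumes q: "q \<noteq> 0" and d: "\<delta> \<noteq> 0"
  and H: "complex_of_real (\<delta>^2) * cnj \<alpha> = \<beta> * complex_of_real (q^2)" and s: "wfS s"
  shows "peq q (JS q \<delta> (DiracS q \<alpha> \<beta> s)) (DiracS q \<alpha> \<beta> (JS q \<delta> s))"
proof (rule peq_eqI)
  let ?Q = "complex_of_real q" and ?d = "complex_of_real \<delta>"
  have hX: "hom (-1) (F s)" "hom 1 (S s)" using s by (auto simp: wfS_def intro: hom_abs)
  have H': "?d^2 * \<alpha> = cnj \<beta> * ?Q^2" using arg_cong[OF H, of cnj] by simp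
  have Qd: "?Q \<noteq> 0" "?d \<noteq> 0" using q d by auto
  have k1: "- inverse ?d * (cnj \<beta> * ?Q) = - (\<alpha> * inverse ?Q * ?d)"
    using H' Qd by (simp add: field_simps power2_eq_square)
  have k2: "?d * (cnj \<alpha> * inverse ?Q) = \<beta> * ?Q * inverse ?d"
    using H Qd by (simp add: field_simps power2_eq_square)
  show "F (JS q \<delta> (DiracS q \<alpha> \<beta> s)) = F (DiracS q \<alpha> \<beta> (JS q \<delta> s))"
    using St_Dm[OF q hX(1)] k1 by (simp add: sc_neg)
  show "S (JS q \<delta> (DiracS q \<alpha> \<beta> s)) = S (DiracS q \<alpha> \<beta> (JS q \<delta> s))"
    using St_Dp[OF q hX(2)] k2 by (simp add: sc_neg)
qed

lemma Jb_abs: assumes q: "q \<noteq> 0" and d: "\<delta> \<noteq> 0"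
  shows "F (JS q \<delta> (plmul b (JSinv q \<delta> u))) = F u * St q (abs_fp b)"
        "S (JS q \<delta> (plmul b (JSinv q \<delta> u))) = S u * St q (abs_fp b)"
  using q d by (simp_all add: St_mult St_St sc_neg)

lemma conj11: assumes q: "q \<noteq> 0" and d: "\<delta> \<noteq> 0" and a: "homog 0 a" and b: "homog 0 b" and s: "wfS s"
  shows "let Da = (\<lambda>u. psub (DiracS q \<alpha> \<beta> (plmul a u)) (plmul a (DiracS q \<alpha> \<beta> u)));
              Jb = (\<lambda>u. JS q \<delta> (plmul b (JSinv q \<delta> u)))
          in peq q (Da (Jb s)) (Jb (Da s))"
proof -
  let ?Q = "complex_of_real q" and ?A = "abs_fp a" and ?Bs = "St q (abs_fp b)"
  have hX: "hom (-1) (F s)" "hom 1 (S s)" using s by (auto simp: wfS_def intro: hom_abs)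
  have hB: "hom 0 ?Bs" using hom_St[OF hom_abs[OF b]] by simp
  have h1: "hom 1 (S s * ?Bs)" "hom (-1) (F s * ?Bs)" using hom_mult[OF hX(2) hB] hom_mult[OF hX(1) hB] by simp_all
  have e: "Dp q (?A * (S s * ?Bs)) = sc ?Q (Dp q ?A * (S s * ?Bs)) + ?A * Dp q (S s * ?Bs)"
          "Dm q (?A * (F s * ?Bs)) = sc (inverse ?Q) (Dm q ?A * (F s * ?Bs)) + ?A * Dm q (F s * ?Bs)"
          "Dp q (?A * S s) = sc ?Q (Dp q ?A * S s) + ?A * Dp q (S s)"
          "Dm q (?A * F s) = sc (inverse ?Q) (Dm q ?A * F s) + ?A * Dm q (F s)"
    using Dg_leibniz[OF q h1(1), of "dplus_gen q" ?A] Dg_leibniz[OF q h1(2), of "dminus_gen q" ?A]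
      Dg_leibniz[OF q hX(2), of "dplus_gen q" ?A] Dg_leibniz[OF q hX(1), of "dminus_gen q" ?A]
    by (simp_all add: power_int_minus)
  show ?thesis unfolding Let_def
    using q d by (intro peq_eqI) (simp_all add: St_mult St_St sc_neg e algebra_simps mult.assoc)
qed

lemma conn: assumes q: "q \<noteq> 0" shows "left_bimodule_connection_S q (nablaS q) (sigmaS q)"
  unfolding left_bimodule_connection_S_def
  apply (intro conjI allI impI)
  subgoal using C1 by blast
  subgoal using C2[OF q] by blast
  subgoal using C3 by blast
  subgoal using C4 by blast
  subgoal using C5[OF q] by blast
  subgoal using C6 by blast
  subgoal using C7[OF q] by blast
  subgoal using C8 by blast
  subgoal using C9 by blast
  subgoal using C10 by blast
  subgoal using C11 by blast
  subgoal using C12[OF q] by blast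
  done

theorem mainTheorem6:
  fixes q \<delta> :: real and \<alpha> \<beta> :: complex
  assumes "q \<noteq> 0" and "\<delta> \<noteq> 0"
    and "complex_of_real (\<delta>^2) * cnj \<alpha> = \<beta> * complex_of_real (q^2)"
  shows "left_bimodule_connection_S q (nablaS q) (sigmaS q)
    \<and> (\<forall>s. wfS s \<longrightarrow> peq q (cliff \<alpha> \<beta> (nablaS q s)) (DiracS q \<alpha> \<beta> s))
    \<and> (\<forall>s. wfS s \<longrightarrow> peq q (JS q \<delta> (JSinv q \<delta> s)) s \<and> peq q (JSinv q \<delta> (JS q \<delta> s)) s)
    \<and> (\<forall>s. wfS s \<longrightarrow> peq q (JS q \<delta> (JS q \<delta> s)) (pneg s))
    \<and> (\<forall>s. wfS s \<longrightarrow> peq q (JS q \<delta> (gammaS s)) (pneg (gammaS (JS q \<delta> s))))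
    \<and> (\<forall>s. wfS s \<longrightarrow> peq q (gammaS (gammaS s)) s)
    \<and> (\<forall>a s. homog 0 a \<longrightarrow> wfS s \<longrightarrow> peq q (gammaS (plmul a s)) (plmul a (gammaS s)))
    \<and> (\<forall>s. wfS s \<longrightarrow> peq q (DiracS q \<alpha> \<beta> (gammaS s)) (pneg (gammaS (DiracS q \<alpha> \<beta> s))))
    \<and> (\<forall>a b s. homog 0 a \<longrightarrow> homog 0 b \<longrightarrow> wfS s \<longrightarrow>
         peq q (plmul a (JS q \<delta> (plmul b (JSinv q \<delta> s))))
               (JS q \<delta> (plmul b (JSinv q \<delta> (plmul a s)))))
    \<and> (\<forall>s. wfS s \<longrightarrow> peq q (JS q \<delta> (DiracS q \<alpha> \<beta> s)) (DiracS q \<alpha> \<beta> (JS q \<delta> s)))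
    \<and> (\<forall>a b s. homog 0 a \<longrightarrow> homog 0 b \<longrightarrow> wfS s \<longrightarrow>
         (let Da = (\<lambda>u. psub (DiracS q \<alpha> \<beta> (plmul a u)) (plmul a (DiracS q \<alpha> \<beta> u)));
              Jb = (\<lambda>u. JS q \<delta> (plmul b (JSinv q \<delta> u)))
          in peq q (Da (Jb s)) (Jb (Da s))))"
  using assms
  apply (intro conjI allI impI)
  subgoal by (rule conn[OF assms(1)])
  subgoal by (rule conj2[OF assms(1)])
  subgoal by (rule conj3(1)[OF assms(1,2)])
  subgoal by (rule conj3(2)[OF assms(1,2)])
  subgoal by (rule conj4[OF assms(1,2)])
  subgoal by (rule conj5)
  subgoal by (rule conj6)
  subgoal by (rule conj7)
  subgoal by (rule conj8)
  subgoal by (rule conj9[OF assms(1,2)])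
  subgoal by (rule conj10[OF assms(1,2,3)])
  subgoal by (rule conj11[OF assms(1,2)])
  done

end
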